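(* Let $G=(V,E)$ be a finite simple graph with maximum vertex degree $\Delta$, let $w\in(0,1)$ and let $M\subseteq E$. Suppose the even subgraph model on $G$ with measure $\lambda(A)=w^{|A\oplus M|}$ has $(\chi_2,\chi_4)$-bounded defect susceptibility, i.e. \[ \frac{\lambda(\mathcal C_2)}{\lambda(\mathcal C_0)}\le \chi_2,\qquad \frac{\lambda(\mathcal C_4)}{\lambda(\mathcal C_0)}\le \chi_4 . \] Then the relaxation time of the lazy worm process on $\mathcal W=\mathcal C_0\cup\mathcal C_2$ satisfies \[ t_{\rm rel}\le 8\,\Delta\, w^{-1}\,|E|\,\bigl[(1+\chi_2)(2+|V|)+2\chi_4\bigr]. \]
   Context: Subgraphs of $G$ are identified with edge subsets $A\subseteq E$; $\oplus$ denotes symmetric difference, $d(u)$ the degree of vertex $u$ in $G$, and $\partial A$ the set of vertices having odd degree in $(V,A)$. $\mathcal C_k=\{A\subseteq E: |\partial A|=k\}$, and for a set $\mathcal S$ of subgraphs $\lambda(\mathcal S)=\sum_{A\in\mathcal S}\lambda(A)$, where $\lambda(A)=w^{|A\oplus M|}$. The state space is $\mathcal W=\mathcal C_0\cup\mathcal C_2$, equipped with the Prokof'ev–Svistunov measure $\pi(A)=\Psi(A)\lambda(A)/(|V|\lambda(\mathcal C_0)+2\lambda(\mathcal C_2))$, where $\Psi(A)=|V|$ if $A\in\mathcal C_0$ and $\Psi(A)=2$ if $A\in\mathcal C_2$. The lazy worm process is the Markov chain on $\mathcal W$ whose transition matrix $P$ is as follows: for $A\in\mathcal W$ and an edge $e=uv\in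 E$ with $A\oplus e\in\mathcal W$, (i) if $A\in\mathcal C_0$: $P(A,A\oplus e)=w^{\mathbf 1[e\notin A\oplus M]}\frac{1}{2|V|}\bigl(\frac1{d(u)}+\frac1{d(v)}\bigr)$; (ii) if $A\in\mathcal C_2$ and $A\oplus e\in\mathcal C_0$: $P(A,A\oplus e)=w^{\mathbf 1[e\notin A\oplus M]}\frac14\bigl(\frac1{d(u)}+\frac1{d(v)}\bigr)$; (iii) if $A\in\mathcal C_2$, $A\oplus e\in\mathcal C_2$ and $u\in\partial A$: $P(A,A\oplus e)=\min\!\bigl(\frac{d(u)}{d(v)}w^{\mathbf 1[e\notin A\oplus M]-\mathbf 1[e\in A\oplus M]},1\bigr)\frac{1}{4d(u)}$; all other off-diagonal entries are $0$ and $P(A,A)=1-\sum_{B\neq A}P(A,B)$. The relaxation time is $t_{\rm rel}=1/\gamma_\ast$, where $\gamma_\ast=1-\max\{|\mu|:\mu\ne 1 \text{ an eigenvalue of } P\}$ is the absolute spectral gap of $P$. *)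

theory Defs
  imports Complex_Main
begin

definition simple_graph :: "'a set \<Rightarrow> 'a set set \<Rightarrow> bool" where
  "simple_graph V E \<longleftrightarrow> finite V \<and> (\<forall>e\<in>E. \<exists>u v. e = {u, v} \<and> u \<in> V \<and> v \<in> V \<and> u \<noteq> v)"

definition symdiff :: "'b set \<Rightarrow> 'b set \<Rightarrow> 'b set" where
  "symdiff A B = (A - B) \<union> (B - A)"

definition deg :: "'a set set \<Rightarrow> 'a \<Rightarrow> nat" where
  "deg A u = card {e \<in> A. u \<in> e}"

definition max_degree :: "'a set \<Rightarrow> 'a set set \<Rightarrow> nat" where
  "max_degree V E = Max (deg E ` V)"

definition bdry :: "'a set \<Rightarrow> 'a set set \<Rightarrow> 'a set" where
  "bdry V A = {u \<in> V. odd (deg A u)}"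

definition Ck :: "'a set \<Rightarrow> 'a set set \<Rightarrow> nat \<Rightarrow> 'a set set set" where
  "Ck V E k = {A. A \<subseteq> E \<and> card (bdry V A) = k}"

definition wt :: "real \<Rightarrow> 'a set set \<Rightarrow> 'a set set \<Rightarrow> real" where
  "wt w M A = w ^ card (symdiff A M)"

definition wtS :: "real \<Rightarrow> 'a set set \<Rightarrow> 'a set set set \<Rightarrow> real" where
  "wtS w M S = (\<Sum>A\<in>S. wt w M A)"

definition worm_space :: "'a set \<Rightarrow> 'a set set \<Rightarrow> 'a set set set" where
  "worm_space V E = Ck V E 0 \<union> Ck V E 2"

definition worm_off :: "'a set \<Rightarrow> 'a set set \<Rightarrow> real \<Rightarrow> 'a set set \<Rightarrow> 'a set set \<Rightarrow> 'a set set \<Rightarrow> real" where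
  "worm_off V E w M A B =
    (if A \<in> worm_space V E \<and> B \<in> worm_space V E \<and> (\<exists>e\<in>E. symdiff A B = {e}) then
      (let e = the_elem (symdiff A B);
           ind = (e \<notin> symdiff A M);
           fl = (if ind then w else 1)
       in if A \<in> Ck V E 0 then
            fl * (1 / (2 * real (card V))) * (\<Sum>x\<in>e. 1 / real (deg E x))
          else if B \<in> Ck V E 0 then
            fl * (1/4) * (\<Sum>x\<in>e. 1 / real (deg E x))
          else
            (let u = the_elem (e \<inter> bdry V A); v = the_elem (e - {u}) in
              min (real (deg E u) / real (deg E v) * (if ind then w else inverse w)) 1
                * (1 / (4 * real (deg E u)))))
     else 0)"

definition worm_P :: "'a set \<Rightarrow> 'a set set \<Rightarrow> real \<Rightarrow> 'a set set \<Rightarrow> 'a set set \<Rightarrow> 'a set set \<Rightarrow> real" where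
  "worm_P V E w M A B =
    (if A = B then 1 - (\<Sum>C\<in>worm_space V E - {A}. worm_off V E w M A C)
     else worm_off V E w M A B)"

definition is_eigenvalue :: "'s set \<Rightarrow> ('s \<Rightarrow> 's \<Rightarrow> real) \<Rightarrow> complex \<Rightarrow> bool" where
  "is_eigenvalue S P \<mu> \<longleftrightarrow>
    (\<exists>f :: 's \<Rightarrow> complex. (\<exists>x\<in>S. f x \<noteq> 0) \<and>
        (\<forall>x\<in>S. (\<Sum>y\<in>S. complex_of_real (P x y) * f y) = \<mu> * f x))"

definition abs_spectral_gap :: "'s set \<Rightarrow> ('s \<Rightarrow> 's \<Rightarrow> real) \<Rightarrow> real" where
  "abs_spectral_gap S P = 1 - Max {cmod \<mu> | \<mu>. is_eigenvalue S P \<mu> \<and> \<mu> \<noteq> 1}"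

definition relaxation_time :: "'s set \<Rightarrow> ('s \<Rightarrow> 's \<Rightarrow> real) \<Rightarrow> real" where
  "relaxation_time S P = 1 / abs_spectral_gap S P"

end

theory Submission
  imports Defs "Jordan_Normal_Form.Char_Poly"
begin


locale revchain =
  fixes S :: "'s set" and P :: "'s \<Rightarrow> 's \<Rightarrow> real" and pi :: "'s \<Rightarrow> real" and B :: real
  assumes fin: "finite S"
    and pipos: "\<And>x. x \<in> S \<Longrightarrow> pi x > 0"
    and rowsum: "\<And>x. x \<in> S \<Longrightarrow> (\<Sum>y\<in>S. P x y) = 1"
    and nonneg: "\<And>x y. x \<in> S \<Longrightarrow> y \<in> S \<Longrightarrow> x \<noteq> y \<Longrightarrow> P x y \<ge> 0"
    and lazy: "\<And>x. x \<in> S \<Longrightarrow> P x x \<ge> 1/2"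
    and rev: "\<And>x y. x \<in> S \<Longrightarrow> y \<in> S \<Longrightarrow> pi x * P x y = pi y * P y x"
    and Bpos: "B > 0"
    and poinc: "\<And>g. (\<Sum>x\<in>S. pi x * g x) = 0 \<Longrightarrow>
        (\<Sum>x\<in>S. pi x * (g x)^2) \<le> B * ((1/2) * (\<Sum>x\<in>S. \<Sum>y\<in>S. pi x * P x y * (g x - g y)^2))"
    and card2: "card S \<ge> 2"
begin

lemma symm_form:
  "(\<Sum>x\<in>S. pi x * u x * (\<Sum>y\<in>S. P x y * v y)) = (\<Sum>x\<in>S. pi x * v x * (\<Sum>y\<in>S. P x y * u y))"
proof -
  have "(\<Sum>x\<in>S. pi x * u x * (\<Sum>y\<in>S. P x y * v y)) = (\<Sum>x\<in>S. \<Sum>y\<in>S. (pi x * P x y) * u x * v y)"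
    by (simp add: sum_distrib_left mult_ac)
  also have "\<dots> = (\<Sum>x\<in>S. \<Sum>y\<in>S. (pi y * P y x) * u x * v y)"
    by (intro sum.cong refl) (simp add: rev)
  also have "\<dots> = (\<Sum>y\<in>S. \<Sum>x\<in>S. (pi y * P y x) * u x * v y)"
    by (rule sum.swap)
  also have "\<dots> = (\<Sum>x\<in>S. pi x * v x * (\<Sum>y\<in>S. P x y * u y))"
    by (simp add: sum_distrib_left mult_ac)
  finally show ?thesis .
qed

lemma stationary:
  "(\<Sum>x\<in>S. pi x * (\<Sum>y\<in>S. P x y * v y)) = (\<Sum>x\<in>S. pi x * v x)"
  using symm_form[of "\<lambda>_. 1" v] by (simp add: rowsum)

lemma real_eig:
  fixes g :: "'s \<Rightarrow> real"
  assumes eig: "\<And>x. x \<in> S \<Longrightarrow> (\<Sum>y\<in>S. P x y * g y) = r * g x"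
    and orth: "(\<Sum>x\<in>S. pi x * g x) = 0"
    and nz: "x0 \<in> S" "g x0 \<noteq> 0"
  shows "0 \<le> r \<and> r \<le> 1 - 1/B"
proof -
  define N2 where "N2 = (\<Sum>x\<in>S. pi x * (g x)^2)"
  define H where "H = (\<Sum>x\<in>S. pi x * g x * (\<Sum>y\<in>S. P x y * g y))"
  have N2pos: "N2 > 0"
  proof -
    have "pi x0 * (g x0)^2 > 0" using pipos[OF nz(1)] nz(2) by simp
    moreover have "pi x0 * (g x0)^2 \<le> N2" unfolding N2_def
      by (rule member_le_sum) (use nz fin in \<open>auto intro!: mult_nonneg_nonneg simp: less_imp_le[OF pipos]\<close>)
    ultimately show ?thesis by linarith
  qed
  have "H = (\<Sum>x\<in>S. pi x * g x * (r * g x))" unfolding H_def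
    by (intro sum.cong) (simp_all add: eig)
  also have "\<dots> = r * N2" unfolding N2_def by (simp add: sum_distrib_left power2_eq_square mult_ac)
  finally have H: "H = r * N2" .
  have s1: "(\<Sum>x\<in>S. \<Sum>y\<in>S. pi x * P x y * (g x)^2) = N2"
  proof -
    have "(\<Sum>x\<in>S. \<Sum>y\<in>S. pi x * P x y * (g x)^2) = (\<Sum>x\<in>S. pi x * (g x)^2 * (\<Sum>y\<in>S. P x y))"
      by (simp add: sum_distrib_left sum_distrib_right mult_ac)
    also have "\<dots> = N2" unfolding N2_def by (simp add: rowsum)
    finally show ?thesis .
  qed
  have s2: "(\<Sum>x\<in>S. \<Sum>y\<in>S. pi x * P x y * (g y)^2) = N2"
  proof -
    have "(\<Sum>x\<in>S. \<Sum>y\<in>S. pi x * P x y * (g y)^2) = (\<Sum>x\<in>S. \<Sum>y\<in>S. pi y * P y x * (g y)^2)"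
      by (intro sum.cong refl) (simp add: rev)
    also have "\<dots> = (\<Sum>y\<in>S. \<Sum>x\<in>S. pi y * P y x * (g y)^2)" by (rule sum.swap)
    also have "\<dots> = N2" using s1 by simp
    finally show ?thesis .
  qed
  have s3: "(\<Sum>x\<in>S. \<Sum>y\<in>S. pi x * P x y * (g x * g y)) = H"
    unfolding H_def by (simp add: sum_distrib_left mult_ac)
  have D1: "(\<Sum>x\<in>S. \<Sum>y\<in>S. pi x * P x y * (g x - g y)^2) = 2 * N2 - 2 * H"
  proof -
    have e: "\<And>x y. pi x * P x y * (g x - g y)^2 = pi x * P x y * (g x)^2 + pi x * P x y * (g y)^2 - 2 * (pi x * P x y * (g x * g y))"
      by (simp add: power2_eq_square algebra_simps)
    show ?thesis
      by (simp only: e sum.distrib sum_subtractf sum_distrib_left[symmetric] s1 s2 s3)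
  qed
  have D2: "(\<Sum>x\<in>S. \<Sum>y\<in>S. pi x * P x y * (g x + g y)^2) = 2 * N2 + 2 * H"
  proof -
    have e: "\<And>x y. pi x * P x y * (g x + g y)^2 = pi x * P x y * (g x)^2 + pi x * P x y * (g y)^2 + 2 * (pi x * P x y * (g x * g y))"
      by (simp add: power2_eq_square algebra_simps)
    show ?thesis
      by (simp only: e sum.distrib sum_distrib_left[symmetric] s1 s2 s3)
  qed
  have low: "(\<Sum>x\<in>S. \<Sum>y\<in>S. pi x * P x y * (g x + g y)^2) \<ge> 2 * N2"
  proof -
    have "\<And>x. x \<in> S \<Longrightarrow> (\<Sum>y\<in>S. pi x * P x y * (g x + g y)^2) \<ge> 2 * (pi x * (g x)^2)"
    proof -
      fix x assume x: "x \<in> S"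
      have "pi x * P x x * (g x + g x)^2 \<le> (\<Sum>y\<in>S. pi x * P x y * (g x + g y)^2)"
        by (rule member_le_sum) (use x fin nonneg in \<open>auto intro!: mult_nonneg_nonneg simp: less_imp_le[OF pipos]\<close>)
      moreover have "pi x * P x x * (g x + g x)^2 = 4 * (pi x * (g x)^2) * P x x"
        by (simp add: power2_eq_square algebra_simps)
      moreover have "4 * (pi x * (g x)^2) * P x x \<ge> 4 * (pi x * (g x)^2) * (1/2)"
        by (rule mult_left_mono) (use lazy[OF x] pipos[OF x] in auto)
      ultimately show "(\<Sum>y\<in>S. pi x * P x y * (g x + g y)^2) \<ge> 2 * (pi x * (g x)^2)" by linarith
    qed
    then have "(\<Sum>x\<in>S. \<Sum>y\<in>S. pi x * P x y * (g x + g y)^2) \<ge> (\<Sum>x\<in>S. 2 * (pi x * (g x)^2))"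
      by (intro sum_mono) auto
    then show ?thesis unfolding N2_def by (simp add: sum_distrib_left)
  qed
  have "H \<ge> 0" using low D2 by linarith
  then have r0: "r \<ge> 0" using H N2pos by (simp add: zero_le_mult_iff)
  have "N2 \<le> B * ((1/2) * (2 * N2 - 2 * H))"
    using poinc[OF orth] D1 unfolding N2_def by simp
  then have "N2 \<le> B * (1 - r) * N2" using H by (simp add: algebra_simps)
  then have "1 \<le> B * (1 - r)" using N2pos by simp
  then have "1 / B \<le> 1 - r" using Bpos by (simp add: field_simps)
  then show ?thesis using r0 by simp
qed


lemma cplx_eig:
  fixes f :: "'s \<Rightarrow> complex"
  assumes eig: "\<And>x. x \<in> S \<Longrightarrow> (\<Sum>y\<in>S. complex_of_real (P x y) * f y) = \<mu> * f x"
    and orth: "(\<Sum>x\<in>S. complex_of_real (pi x) * f x) = 0"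
    and nz: "x0 \<in> S" "f x0 \<noteq> 0"
  shows "Im \<mu> = 0 \<and> 0 \<le> Re \<mu> \<and> Re \<mu> \<le> 1 - 1/B"
proof -
  define g where "g x = Re (f x)" for x
  define h where "h x = Im (f x)" for x
  define a where "a = Re \<mu>"
  define b where "b = Im \<mu>"
  have eg: "(\<Sum>y\<in>S. P x y * g y) = a * g x - b * h x" if x: "x \<in> S" for x
  proof -
    have "Re (\<Sum>y\<in>S. complex_of_real (P x y) * f y) = Re (\<mu> * f x)" using eig[OF x] by simp
    then show ?thesis by (simp add: g_def h_def a_def b_def Re_sum)
  qed
  have eh: "(\<Sum>y\<in>S. P x y * h y) = b * g x + a * h x" if x: "x \<in> S" for x
  proof -
    have "Im (\<Sum>y\<in>S. complex_of_real (P x y) * f y) = Im (\<mu> * f x)" using eig[OF x] by simp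
    then show ?thesis by (simp add: g_def h_def a_def b_def Im_sum)
  qed
  have og: "(\<Sum>x\<in>S. pi x * g x) = 0"
  proof -
    have "Re (\<Sum>x\<in>S. complex_of_real (pi x) * f x) = 0" using orth by simp
    then show ?thesis by (simp add: g_def Re_sum)
  qed
  have oh: "(\<Sum>x\<in>S. pi x * h x) = 0"
  proof -
    have "Im (\<Sum>x\<in>S. complex_of_real (pi x) * f x) = 0" using orth by simp
    then show ?thesis by (simp add: h_def Im_sum)
  qed
  define Ng where "Ng = (\<Sum>x\<in>S. pi x * g x * g x)"
  define Nh where "Nh = (\<Sum>x\<in>S. pi x * h x * h x)"
  define Gh where "Gh = (\<Sum>x\<in>S. pi x * g x * h x)"
  have "(\<Sum>x\<in>S. pi x * g x * (\<Sum>y\<in>S. P x y * h y)) = (\<Sum>x\<in>S. pi x * h x * (\<Sum>y\<in>S. P x y * g y))"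
    by (rule symm_form)
  also have "(\<Sum>x\<in>S. pi x * g x * (\<Sum>y\<in>S. P x y * h y)) = (\<Sum>x\<in>S. pi x * g x * (b * g x + a * h x))"
    by (intro sum.cong) (simp_all add: eh)
  also have "\<dots> = b * Ng + a * Gh" unfolding Ng_def Gh_def
    by (simp add: algebra_simps sum.distrib sum_distrib_left)
  also have "(\<Sum>x\<in>S. pi x * h x * (\<Sum>y\<in>S. P x y * g y)) = (\<Sum>x\<in>S. pi x * h x * (a * g x - b * h x))"
    by (intro sum.cong) (simp_all add: eg)
  also have "\<dots> = a * Gh - b * Nh" unfolding Nh_def Gh_def
    by (simp add: algebra_simps sum_subtractf sum_distrib_left)
  finally have bb: "b * (Ng + Nh) = 0" by (simp add: algebra_simps)
  have Ng0: "Ng \<ge> 0" unfolding Ng_def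
    by (intro sum_nonneg) (simp add: mult.assoc less_imp_le[OF pipos])
  have Nh0: "Nh \<ge> 0" unfolding Nh_def
    by (intro sum_nonneg) (simp add: mult.assoc less_imp_le[OF pipos])
  have gh: "g x0 \<noteq> 0 \<or> h x0 \<noteq> 0" using nz(2) by (simp add: g_def h_def complex_eq_iff)
  have pos: "Ng + Nh > 0"
  proof -
    have "pi x0 * g x0 * g x0 + pi x0 * h x0 * h x0 > 0"
    proof -
      have "g x0 * g x0 + h x0 * h x0 > 0" using gh
        using sum_squares_gt_zero_iff by blast
      then have "pi x0 * (g x0 * g x0 + h x0 * h x0) > 0" using pipos[OF nz(1)] by simp
      then show ?thesis by (simp add: algebra_simps)
    qed
    moreover have "pi x0 * g x0 * g x0 + pi x0 * h x0 * h x0 \<le> Ng + Nh"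
    proof -
      have "(\<Sum>x\<in>S. pi x * g x * g x + pi x * h x * h x) \<ge> pi x0 * g x0 * g x0 + pi x0 * h x0 * h x0"
        by (rule member_le_sum) (use nz fin in \<open>auto intro!: add_nonneg_nonneg simp: mult.assoc less_imp_le[OF pipos]\<close>)
      then show ?thesis unfolding Ng_def Nh_def by (simp add: sum.distrib)
    qed
    ultimately show ?thesis by linarith
  qed
  have b0: "b = 0" using bb pos by simp
  have eg': "\<And>x. x \<in> S \<Longrightarrow> (\<Sum>y\<in>S. P x y * g y) = a * g x" using eg b0 by simp
  have eh': "\<And>x. x \<in> S \<Longrightarrow> (\<Sum>y\<in>S. P x y * h y) = a * h x" using eh b0 by simp
  have "0 \<le> a \<and> a \<le> 1 - 1/B"
  proof (cases "g x0 \<noteq> 0")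
    case True
    show ?thesis by (rule real_eig[OF eg' og nz(1) True])
  next
    case False
    then have "h x0 \<noteq> 0" using gh by simp
    show ?thesis by (rule real_eig[OF eh' oh nz(1) \<open>h x0 \<noteq> 0\<close>])
  qed
  then show ?thesis using b0 a_def b_def by simp
qed


lemma cstationary:
  "(\<Sum>x\<in>S. complex_of_real (pi x) * (\<Sum>y\<in>S. complex_of_real (P x y) * f y)) = (\<Sum>x\<in>S. complex_of_real (pi x) * f x)"
proof -
  have "(\<Sum>x\<in>S. complex_of_real (pi x) * (\<Sum>y\<in>S. complex_of_real (P x y) * f y))
      = (\<Sum>x\<in>S. \<Sum>y\<in>S. complex_of_real (pi x * P x y) * f y)"
    by (simp add: sum_distrib_left mult_ac)
  also have "\<dots> = (\<Sum>x\<in>S. \<Sum>y\<in>S. complex_of_real (pi y * P y x) * f y)"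
    by (intro sum.cong refl) (simp add: rev)
  also have "\<dots> = (\<Sum>y\<in>S. \<Sum>x\<in>S. complex_of_real (pi y * P y x) * f y)" by (rule sum.swap)
  also have "\<dots> = (\<Sum>y\<in>S. complex_of_real (pi y) * f y * complex_of_real (\<Sum>x\<in>S. P y x))"
    by (simp add: sum_distrib_left sum_distrib_right mult_ac)
  also have "\<dots> = (\<Sum>x\<in>S. complex_of_real (pi x) * f x)" by (simp add: rowsum)
  finally show ?thesis .
qed

lemma eig_orth:
  assumes eig: "\<And>x. x \<in> S \<Longrightarrow> (\<Sum>y\<in>S. complex_of_real (P x y) * f y) = \<mu> * f x"
    and ne: "\<mu> \<noteq> 1"
  shows "(\<Sum>x\<in>S. complex_of_real (pi x) * f x) = 0"
proof -
  have "(\<Sum>x\<in>S. complex_of_real (pi x) * f x) = (\<Sum>x\<in>S. complex_of_real (pi x) * (\<mu> * f x))"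
    using cstationary[of f] by (simp add: eig)
  also have "\<dots> = \<mu> * (\<Sum>x\<in>S. complex_of_real (pi x) * f x)" by (simp add: sum_distrib_left mult_ac)
  finally have "(\<mu> - 1) * (\<Sum>x\<in>S. complex_of_real (pi x) * f x) = 0" by (simp add: algebra_simps)
  then show ?thesis using ne by simp
qed

lemma eig_bound:
  assumes "is_eigenvalue S P \<mu>" "\<mu> \<noteq> 1"
  shows "Im \<mu> = 0 \<and> 0 \<le> Re \<mu> \<and> Re \<mu> \<le> 1 - 1/B"
proof -
  obtain f where nz: "\<exists>x\<in>S. f x \<noteq> 0" and eig: "\<And>x. x \<in> S \<Longrightarrow> (\<Sum>y\<in>S. complex_of_real (P x y) * f y) = \<mu> * f x"
    using assms(1) unfolding is_eigenvalue_def by blast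
  obtain x0 where "x0 \<in> S" "f x0 \<noteq> 0" using nz by blast
  then show ?thesis using cplx_eig[OF eig eig_orth[OF eig assms(2)]] by blast
qed

lemma eig_cmod:
  assumes "is_eigenvalue S P \<mu>" "\<mu> \<noteq> 1"
  shows "cmod \<mu> \<le> 1 - 1/B"
proof -
  have "Im \<mu> = 0" "0 \<le> Re \<mu>" "Re \<mu> \<le> 1 - 1/B" using eig_bound[OF assms] by auto
  then have "\<mu> = complex_of_real (Re \<mu>)" by (simp add: complex_eq_iff)
  then have "cmod \<mu> = \<bar>Re \<mu>\<bar>" by (metis norm_of_real)
  then show ?thesis using \<open>0 \<le> Re \<mu>\<close> \<open>Re \<mu> \<le> 1 - 1/B\<close> by simp
qed

theorem gap_bound: "abs_spectral_gap S P \<ge> 1 / B"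
proof -
  have Sne: "S \<noteq> {}" using card2 by auto
  then obtain a0 where a0: "a0 \<in> S" by blast
  define S' where "S' = S - {a0}"
  define m where "m = card S'"
  have m1: "m \<ge> 1" unfolding m_def S'_def using card2 a0 fin by (simp add: card_Diff_singleton)
  obtain h where h: "bij_betw h {0..<m} S'" using ex_bij_betw_nat_finite[of S'] fin unfolding m_def S'_def by auto
  have hS: "\<And>j. j < m \<Longrightarrow> h j \<in> S" "\<And>j. j < m \<Longrightarrow> h j \<noteq> a0"
    using h unfolding bij_betw_def S'_def by auto
  have splitS: "(\<Sum>x\<in>S. F x) = F a0 + (\<Sum>j\<in>{0..<m}. F (h j))" for F :: "'s \<Rightarrow> complex"
  proof -
    have "(\<Sum>x\<in>S. F x) = F a0 + (\<Sum>x\<in>S'. F x)" unfolding S'_def using a0 fin by (simp add: sum.remove)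
    also have "(\<Sum>x\<in>S'. F x) = (\<Sum>j\<in>{0..<m}. F (h j))" using sum.reindex_bij_betw[OF h, of F] by simp
    finally show ?thesis .
  qed
  define c where "c i j = P (h i) (h j) - P (h i) a0 * pi (h j) / pi a0" for i j
  define C where "C = mat m m (\<lambda>(i,j). complex_of_real (c i j))"
  have Cc: "C \<in> carrier_mat m m" unfolding C_def by simp
  have Cmul: "(C *\<^sub>v vec m (\<lambda>j. f (h j))) $ i = (\<Sum>y\<in>S. complex_of_real (P (h i) y) * f y)"
    if orth: "(\<Sum>x\<in>S. complex_of_real (pi x) * f x) = 0" and i: "i < m" for f i
  proof -
    have o2: "(\<Sum>j\<in>{0..<m}. complex_of_real (pi (h j)) * f (h j)) = - (complex_of_real (pi a0) * f a0)"
      using orth splitS[of "\<lambda>x. complex_of_real (pi x) * f x"] by (simp add: add_eq_0_iff)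
    have pa0: "pi a0 \<noteq> 0" using pipos[OF a0] by simp
    have "(C *\<^sub>v vec m (\<lambda>j. f (h j))) $ i = (\<Sum>j\<in>{0..<m}. complex_of_real (c i j) * f (h j))"
      using i Cc unfolding C_def by (simp add: scalar_prod_def)
    also have "\<dots> = (\<Sum>j\<in>{0..<m}. complex_of_real (P (h i) (h j)) * f (h j))
        - complex_of_real (P (h i) a0 / pi a0) * (\<Sum>j\<in>{0..<m}. complex_of_real (pi (h j)) * f (h j))"
      unfolding c_def by (simp add: sum_subtractf sum_distrib_left algebra_simps)
    also have "\<dots> = (\<Sum>j\<in>{0..<m}. complex_of_real (P (h i) (h j)) * f (h j))
        - complex_of_real (P (h i) a0 / pi a0) * (- (complex_of_real (pi a0) * f a0))"
      by (simp only: o2)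
    also have "\<dots> = (\<Sum>j\<in>{0..<m}. complex_of_real (P (h i) (h j)) * f (h j)) + complex_of_real (P (h i) a0) * f a0"
      using pa0 by (simp add: field_simps)
    also have "\<dots> = (\<Sum>y\<in>S. complex_of_real (P (h i) y) * f y)"
      using splitS[of "\<lambda>y. complex_of_real (P (h i) y) * f y"] by simp
    finally show ?thesis .
  qed
  define Ev where "Ev = {cmod \<mu> |\<mu>. is_eigenvalue S P \<mu> \<and> \<mu> \<noteq> 1}"
  have cp0: "char_poly C \<noteq> 0"
    using degree_monic_char_poly[OF Cc] by auto
  have EvSub: "Ev \<subseteq> cmod ` {x. poly (char_poly C) x = 0}"
  proof
    fix r assume "r \<in> Ev"
    then obtain \<mu> where r: "r = cmod \<mu>" and ev: "is_eigenvalue S P \<mu>" and ne: "\<mu> \<noteq> 1"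
      unfolding Ev_def by blast
    obtain f where nz: "\<exists>x\<in>S. f x \<noteq> 0" and eig: "\<And>x. x \<in> S \<Longrightarrow> (\<Sum>y\<in>S. complex_of_real (P x y) * f y) = \<mu> * f x"
      using ev unfolding is_eigenvalue_def by blast
    have orth: "(\<Sum>x\<in>S. complex_of_real (pi x) * f x) = 0" by (rule eig_orth[OF eig ne])
    define v where "v = vec m (\<lambda>j. f (h j))"
    have v0: "v \<noteq> 0\<^sub>v m"
    proof
      assume v0: "v = 0\<^sub>v m"
      then have fh: "\<And>j. j < m \<Longrightarrow> f (h j) = 0" unfolding v_def
        by (metis index_vec index_zero_vec(1))
      then have "(\<Sum>j\<in>{0..<m}. complex_of_real (pi (h j)) * f (h j)) = 0" by simp
      then have "complex_of_real (pi a0) * f a0 = 0" using orth splitS[of "\<lambda>x. complex_of_real (pi x) * f x"] by simp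
      then have fa0: "f a0 = 0" using pipos[OF a0] by simp
      have "\<forall>x\<in>S. f x = 0"
      proof
        fix x assume x: "x \<in> S"
        show "f x = 0"
        proof (cases "x = a0")
          case True then show ?thesis using fa0 by simp
        next
          case False
          then have "x \<in> S'" using x unfolding S'_def by simp
          then obtain j where "j < m" "x = h j" using h unfolding bij_betw_def by auto
          then show ?thesis using fh by simp
        qed
      qed
      then show False using nz by blast
    qed
    have "C *\<^sub>v v = \<mu> \<cdot>\<^sub>v v"
    proof (rule eq_vecI)
      fix i assume "i < dim_vec (\<mu> \<cdot>\<^sub>v v)"
      then have i: "i < m" unfolding v_def by simp
      show "(C *\<^sub>v v) $ i = (\<mu> \<cdot>\<^sub>v v) $ i"
        unfolding v_def using Cmul[OF orth i] eig[OF hS(1)[OF i]] i by simp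
    qed (use Cc v_def in simp)
    then have "eigenvector C v \<mu>" unfolding eigenvector_def using v0 Cc v_def by simp
    then have "eigenvalue C \<mu>" unfolding eigenvalue_def by blast
    then have "poly (char_poly C) \<mu> = 0" using eigenvalue_root_char_poly[OF Cc] by simp
    then show "r \<in> cmod ` {x. poly (char_poly C) x = 0}" using r by blast
  qed
  have finEv: "finite Ev"
    using finite_subset[OF EvSub] poly_roots_finite[OF cp0] by blast
  have EvNe: "Ev \<noteq> {}"
  proof -
    obtain as where as: "char_poly C = (\<Prod>a\<leftarrow>as. [:- a, 1:])" "length as = m"
      using char_poly_factorized[OF Cc] by blast
    then obtain \<mu> rest where asc: "as = \<mu> # rest" using m1 by (cases as) auto
    have "poly (char_poly C) \<mu> = 0" using as(1) asc by (simp add: poly_prod_list)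
    then have "eigenvalue C \<mu>" using eigenvalue_root_char_poly[OF Cc] by simp
    then obtain v where ev: "eigenvector C v \<mu>" unfolding eigenvalue_def by blast
    then have vc: "v \<in> carrier_vec m" and v0: "v \<noteq> 0\<^sub>v m" and Cv: "C *\<^sub>v v = \<mu> \<cdot>\<^sub>v v"
      unfolding eigenvector_def using Cc by auto
    define f where "f x = (if x = a0 then - (\<Sum>j\<in>{0..<m}. complex_of_real (pi (h j)) * v $ j) / complex_of_real (pi a0)
                           else v $ (the_inv_into {0..<m} h x))" for x
    have fh: "f (h j) = v $ j" if j: "j < m" for j
    proof -
      have "the_inv_into {0..<m} h (h j) = j"
        using h j by (simp add: bij_betw_def the_inv_into_f_f)
      then show ?thesis unfolding f_def using hS(2)[OF j] by simp
    qed
    have pa0: "pi a0 \<noteq> 0" using pipos[OF a0] by simp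
    have orth: "(\<Sum>x\<in>S. complex_of_real (pi x) * f x) = 0"
    proof -
      have "(\<Sum>x\<in>S. complex_of_real (pi x) * f x) = complex_of_real (pi a0) * f a0 + (\<Sum>j\<in>{0..<m}. complex_of_real (pi (h j)) * f (h j))"
        by (rule splitS)
      also have "(\<Sum>j\<in>{0..<m}. complex_of_real (pi (h j)) * f (h j)) = (\<Sum>j\<in>{0..<m}. complex_of_real (pi (h j)) * v $ j)"
        by (intro sum.cong) (simp_all add: fh)
      finally show ?thesis unfolding f_def using pa0 by simp
    qed
    have vv: "vec m (\<lambda>j. f (h j)) = v"
      by (rule eq_vecI) (use vc fh in auto)
    have eigS': "(\<Sum>y\<in>S. complex_of_real (P (h i) y) * f y) = \<mu> * f (h i)" if i: "i < m" for i
    proof -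
      have "(\<Sum>y\<in>S. complex_of_real (P (h i) y) * f y) = (C *\<^sub>v v) $ i" using Cmul[OF orth i] vv by simp
      also have "\<dots> = \<mu> * v $ i" using Cv i vc by simp
      finally show ?thesis using fh[OF i] by simp
    qed
    define F where "F x = (\<Sum>y\<in>S. complex_of_real (P x y) * f y)" for x
    have eig: "F x = \<mu> * f x" if x: "x \<in> S" for x
    proof (cases "x = a0")
      case False
      then have "x \<in> S'" using x unfolding S'_def by simp
      then obtain j where "j < m" "x = h j" using h unfolding bij_betw_def by auto
      then show ?thesis using eigS' unfolding F_def by simp
    next
      case True
      have "(\<Sum>x\<in>S. complex_of_real (pi x) * F x) = 0" unfolding F_def using cstationary[of f] orth by simp
      then have "complex_of_real (pi a0) * F a0 + (\<Sum>j\<in>{0..<m}. complex_of_real (pi (h j)) * F (h j)) = 0"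
        using splitS[of "\<lambda>x. complex_of_real (pi x) * F x"] by simp
      moreover have "(\<Sum>j\<in>{0..<m}. complex_of_real (pi (h j)) * F (h j)) = \<mu> * (\<Sum>j\<in>{0..<m}. complex_of_real (pi (h j)) * f (h j))"
      proof -
        have "(\<Sum>j\<in>{0..<m}. complex_of_real (pi (h j)) * F (h j)) = (\<Sum>j\<in>{0..<m}. complex_of_real (pi (h j)) * (\<mu> * f (h j)))"
          by (intro sum.cong refl) (simp add: F_def eigS')
        then show ?thesis by (simp add: sum_distrib_left mult_ac)
      qed
      moreover have "complex_of_real (pi a0) * f a0 + (\<Sum>j\<in>{0..<m}. complex_of_real (pi (h j)) * f (h j)) = 0"
        using orth splitS[of "\<lambda>x. complex_of_real (pi x) * f x"] by simp
      ultimately have "complex_of_real (pi a0) * F a0 = complex_of_real (pi a0) * (\<mu> * f a0)"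
        by (simp add: algebra_simps add_eq_0_iff)
      then show ?thesis using True pa0 by simp
    qed
    obtain j where j: "j < m" "v $ j \<noteq> 0"
      using v0 vc by (metis carrier_vecD eq_vecI index_zero_vec(1) index_zero_vec(2))
    have nz: "\<exists>x\<in>S. f x \<noteq> 0" using hS(1)[OF j(1)] fh[OF j(1)] j(2) by metis
    have ise: "is_eigenvalue S P \<mu>" unfolding is_eigenvalue_def using nz eig unfolding F_def by blast
    have "Re \<mu> \<le> 1 - 1/B" "Im \<mu> = 0" using cplx_eig[OF eig[unfolded F_def] orth] nz by blast+
    then have "\<mu> \<noteq> 1" using Bpos by auto
    then show ?thesis using ise unfolding Ev_def by blast
  qed
  have "\<forall>r\<in>Ev. r \<le> 1 - 1/B" unfolding Ev_def using eig_cmod by blast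
  then have "Max Ev \<le> 1 - 1/B" using finEv EvNe by simp
  then show ?thesis unfolding abs_spectral_gap_def Ev_def[symmetric] by simp
qed

theorem relax_bound: "abs_spectral_gap S P > 0 \<and> relaxation_time S P \<le> B"
proof -
  have g: "abs_spectral_gap S P \<ge> 1 / B" by (rule gap_bound)
  have gp: "abs_spectral_gap S P > 0" using g Bpos by (meson less_le_trans zero_less_divide_1_iff)
  have "1 / abs_spectral_gap S P \<le> 1 / (1 / B)"
    by (rule divide_left_mono) (use g gp Bpos in auto)
  then show ?thesis using gp unfolding relaxation_time_def by simp
qed

end


lemma symdiff_comm: "symdiff A B = symdiff B A" unfolding symdiff_def by blast
lemma symdiff_assoc: "symdiff (symdiff A B) C = symdiff A (symdiff B C)" unfolding symdiff_def by blast
lemma symdiff_self[simp]: "symdiff A A = {}" unfolding symdiff_def by blast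
lemma symdiff_empty[simp]: "symdiff A {} = A" "symdiff {} A = A" unfolding symdiff_def by blast+
lemma symdiff_cancel: "symdiff A (symdiff A B) = B" unfolding symdiff_def by blast
lemma symdiff_cancel2: "symdiff (symdiff A B) B = A" unfolding symdiff_def by blast
lemma symdiff_inj: "symdiff A B = symdiff A C \<Longrightarrow> B = C" unfolding symdiff_def by blast
lemma symdiff_finite: "finite A \<Longrightarrow> finite B \<Longrightarrow> finite (symdiff A B)" unfolding symdiff_def by blast
lemma symdiff_sub: "A \<subseteq> E \<Longrightarrow> B \<subseteq> E \<Longrightarrow> symdiff A B \<subseteq> E" unfolding symdiff_def by blast

lemma card_symdiff:
  assumes "finite X" "finite Y"
  shows "card (symdiff X Y) + 2 * card (X \<inter> Y) = card X + card Y"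
proof -
  have d: "symdiff X Y = (X - Y) \<union> (Y - X)" unfolding symdiff_def by blast
  have c1: "card (symdiff X Y) = card (X - Y) + card (Y - X)"
    unfolding d by (rule card_Un_disjoint) (use assms in auto)
  have c2: "card X = card (X - Y) + card (X \<inter> Y)"
    using card_Int_Diff[OF assms(1), of Y] by simp
  have c3: "card Y = card (Y - X) + card (X \<inter> Y)"
    using card_Int_Diff[OF assms(2), of X] by (simp add: Int_commute)
  show ?thesis using c1 c2 c3 by simp
qed

lemma card_symdiff_le: "finite X \<Longrightarrow> finite Y \<Longrightarrow> card (symdiff X Y) \<le> card X + card Y"
  using card_symdiff[of X Y] by linarith

lemma even_card_symdiff: "finite X \<Longrightarrow> finite Y \<Longrightarrow> even (card (symdiff X Y)) \<longleftrightarrow> (even (card X) \<longleftrightarrow> even (card Y))"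
proof -
  assume a: "finite X" "finite Y"
  have "card (symdiff X Y) + 2 * card (X \<inter> Y) = card X + card Y" using card_symdiff[OF a] .
  then show ?thesis by presburger
qed

lemma deg_symdiff:
  assumes "finite A" "finite B"
  shows "odd (deg (symdiff A B) u) \<longleftrightarrow> (odd (deg A u) \<noteq> odd (deg B u))"
proof -
  have e: "{e \<in> symdiff A B. u \<in> e} = symdiff {e \<in> A. u \<in> e} {e \<in> B. u \<in> e}"
    unfolding symdiff_def by blast
  show ?thesis unfolding deg_def e
    using even_card_symdiff[of "{e \<in> A. u \<in> e}" "{e \<in> B. u \<in> e}"] assms by auto
qed

lemma bdry_symdiff:
  assumes "finite A" "finite B"
  shows "bdry V (symdiff A B) = symdiff (bdry V A) (bdry V B)"
  unfolding bdry_def symdiff_def[of "{u \<in> V. odd (deg A u)}"]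
  using deg_symdiff[OF assms] by auto

lemma bdry_empty[simp]: "bdry V {} = {}"
  unfolding bdry_def deg_def by simp

lemma bdry_sub: "bdry V A \<subseteq> V" unfolding bdry_def by auto

locale wormctx =
  fixes V :: "'a set" and E M :: "'a set set" and w :: real
  assumes sg: "simple_graph V E" and Ene: "E \<noteq> {}" and w0: "0 < w" and w1: "w < 1" and ME: "M \<subseteq> E"
begin

lemma finV: "finite V" using sg unfolding simple_graph_def by simp

lemma edgeE: assumes "e \<in> E" obtains u v where "e = {u, v}" "u \<in> V" "v \<in> V" "u \<noteq> v"
  using sg assms unfolding simple_graph_def by blast

lemma edge_sub: "e \<in> E \<Longrightarrow> e \<subseteq> V" by (metis edgeE empty_subsetI insert_subset)

lemma card_edge: "e \<in> E \<Longrightarrow> card e = 2" by (metis edgeE card_2_iff)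

lemma finE: "finite E"
proof -
  have "E \<subseteq> Pow V" using edge_sub by auto
  then show ?thesis using finV finite_subset by blast
qed

lemma fin_sub: "A \<subseteq> E \<Longrightarrow> finite A" using finE finite_subset by blast

lemma cardV2: "card V \<ge> 2"
proof -
  obtain e where "e \<in> E" using Ene by blast
  then have "e \<subseteq> V" "card e = 2" using edge_sub card_edge by auto
  then show ?thesis using card_mono[OF finV \<open>e \<subseteq> V\<close>] by simp
qed

abbreviation Delta where "Delta \<equiv> max_degree V E"

lemma deg_pos: assumes "e \<in> E" "x \<in> e" shows "deg E x \<ge> 1"
proof -
  have "e \<in> {e \<in> E. x \<in> e}" using assms by simp
  then have "{e \<in> E. x \<in> e} \<noteq> {}" by blast
  moreover have "finite {e \<in> E. x \<in> e}" using finE by simp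
  ultimately show ?thesis unfolding deg_def by (simp add: Suc_leI card_gt_0_iff)
qed

lemma deg_le: "x \<in> V \<Longrightarrow> deg E x \<le> Delta"
  unfolding max_degree_def using finV by simp

lemma Delta_pos: "Delta \<ge> 1"
proof -
  obtain e where e: "e \<in> E" using Ene by blast
  then obtain u v where "e = {u, v}" "u \<in> V" by (rule edgeE)
  then show ?thesis using deg_pos[OF e, of u] deg_le[of u] by simp
qed

lemma deg_bounds: "e \<in> E \<Longrightarrow> x \<in> e \<Longrightarrow> 1 \<le> deg E x \<and> deg E x \<le> Delta"
  using deg_pos deg_le edge_sub by blast

lemma bdry_single: assumes "e \<in> E" shows "bdry V {e} = e"
proof -
  have "deg {e} u = (if u \<in> e then 1 else 0)" for u
  proof -
    have "{x \<in> {e}. u \<in> x} = (if u \<in> e then {e} else {})" by auto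
    then show ?thesis unfolding deg_def by simp
  qed
  then show ?thesis unfolding bdry_def using edge_sub[OF assms] by auto
qed

lemma bdry_even: "A \<subseteq> E \<Longrightarrow> even (card (bdry V A))"
proof -
  assume A: "A \<subseteq> E"
  have "finite A" using A fin_sub by blast
  then show ?thesis using A
  proof (induction A rule: finite_induct)
    case empty then show ?case by simp
  next
    case (insert e A)
    have eA: "insert e A = symdiff A {e}" using insert(2) unfolding symdiff_def by blast
    have "bdry V (insert e A) = symdiff (bdry V A) e"
      unfolding eA using bdry_symdiff[of A "{e}" V] insert bdry_single[of e] by simp
    moreover have "finite (bdry V A)" using finite_subset[OF bdry_sub finV] .
    moreover have "finite e" using insert finite_subset[OF edge_sub finV] by auto
    moreover have "card e = 2" using insert card_edge by auto
    ultimately show ?case using even_card_symdiff[of "bdry V A" e] insert by simp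
  qed
qed

lemma finB: "finite (bdry V A)" using finite_subset[OF bdry_sub finV] .

lemma W_iff: "A \<in> worm_space V E \<longleftrightarrow> A \<subseteq> E \<and> card (bdry V A) \<le> 2"
proof -
  have "A \<subseteq> E \<Longrightarrow> card (bdry V A) \<le> 2 \<Longrightarrow> card (bdry V A) = 0 \<or> card (bdry V A) = 2"
    using bdry_even[of A] by presburger
  then show ?thesis unfolding worm_space_def Ck_def by auto
qed

lemma finW: "finite (worm_space V E)"
proof -
  have "worm_space V E \<subseteq> Pow E" using W_iff by auto
  then show ?thesis using finE finite_subset by blast
qed

lemma finCk: "finite (Ck V E k)"
proof -
  have "Ck V E k \<subseteq> Pow E" unfolding Ck_def by auto
  then show ?thesis using finE finite_subset by blast
qed

definition flip where "flip A e = symdiff A {e}"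

lemma bdry_flip: "A \<subseteq> E \<Longrightarrow> e \<in> E \<Longrightarrow> bdry V (flip A e) = symdiff (bdry V A) e"
  unfolding flip_def using bdry_symdiff[of A "{e}" V] bdry_single fin_sub by simp

end


lemma card_le1_sub: "finite X \<Longrightarrow> card X \<le> 1 \<Longrightarrow> \<exists>b. X \<subseteq> {b}"
  by (metis card_le_Suc0_iff_eq empty_subsetI insert_subset le_numeral_extra(4) subsetI singletonI
        One_nat_def)

context wormctx begin

definition goodord where
  "goodord D xs \<longleftrightarrow> distinct xs \<and> set xs = D \<and> (\<forall>k\<le>length xs. card (bdry V (set (take k xs))) \<le> 2)"

lemma remove_edge:
  assumes D: "finite D" "D \<subseteq> E" "card (bdry V D) \<le> 2" "D \<noteq> {}"
  shows "\<exists>e\<in>D. card (bdry V (D - {e})) \<le> 2"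
proof -
  have bde: "bdry V (D - {e}) = symdiff (bdry V D) e" if e: "e \<in> D" for e
  proof -
    have "D - {e} = flip D e" unfolding flip_def symdiff_def using e by blast
    then show ?thesis using bdry_flip[of D e] D e by auto
  qed
  show ?thesis
  proof (cases "bdry V D = {}")
    case True
    obtain e where e: "e \<in> D" using D(4) by blast
    then have "card (bdry V (D - {e})) = 2" using bde[OF e] True card_edge D by auto
    then show ?thesis using e by (intro bexI[of _ e]) simp_all
  next
    case False
    then obtain a where a: "a \<in> bdry V D" by blast
    then have "odd (deg D a)" unfolding bdry_def by simp
    then have "deg D a \<noteq> 0" by presburger
    then obtain e where e: "e \<in> D" "a \<in> e" unfolding deg_def by (metis (mono_tags, lifting) card.empty empty_Collect_eq)
    then have eE: "e \<in> E" using D by blast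
    obtain x where ex: "e = {a, x}"
      using edgeE[OF eE] e(2) by (metis insert_commute insertE singletonD)
    have "card (bdry V D - {a}) \<le> 1" using D(3) a finB by (simp add: card_Diff_singleton)
    then obtain b where b: "bdry V D - {a} \<subseteq> {b}" using card_le1_sub finB by blast
    have "symdiff (bdry V D) e \<subseteq> {b, x}" using a b unfolding ex symdiff_def by blast
    then have "card (symdiff (bdry V D) e) \<le> card {b, x}" by (rule card_mono[rotated]) simp
    moreover have "card {b, x} \<le> 2" by (cases "b = x") simp_all
    ultimately have "card (symdiff (bdry V D) e) \<le> 2" by linarith
    then show ?thesis using bde[OF e(1)] e(1) by (intro bexI[of _ e]) simp_all
  qed
qed

lemma order_exists:
  assumes "finite D" "D \<subseteq> E" "card (bdry V D) \<le> 2"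
  shows "\<exists>xs. goodord D xs"
  using assms
proof (induction "card D" arbitrary: D)
  case 0
  then have "D = {}" by simp
  then show ?case unfolding goodord_def by (intro exI[of _ "[]"]) simp
next
  case (Suc n)
  then have Dne: "D \<noteq> {}" by auto
  obtain e where e: "e \<in> D" "card (bdry V (D - {e})) \<le> 2"
    using remove_edge[OF Suc(3) Suc(4) Suc(5) Dne] by blast
  have "n = card (D - {e})" using Suc(2) e(1) Suc(3) by simp
  then obtain xs where xs: "goodord (D - {e}) xs"
    using Suc(1)[of "D - {e}"] Suc(3,4) e(2) by blast
  have "goodord D (xs @ [e])"
    unfolding goodord_def
  proof (intro conjI allI impI)
    show "distinct (xs @ [e])" using xs unfolding goodord_def by auto
    show "set (xs @ [e]) = D" using xs e(1) unfolding goodord_def by auto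
    fix k assume k: "k \<le> length (xs @ [e])"
    show "card (bdry V (set (take k (xs @ [e])))) \<le> 2"
    proof (cases "k \<le> length xs")
      case True
      then show ?thesis using xs unfolding goodord_def by simp
    next
      case False
      then have "take k (xs @ [e]) = xs @ [e]" using k by simp
      then show ?thesis using \<open>set (xs @ [e]) = D\<close> Suc(5) by simp
    qed
  qed
  then show ?case by blast
qed

end


lemma distinct_nth_notin_take: "distinct xs \<Longrightarrow> k < length xs \<Longrightarrow> xs ! k \<notin> set (take k xs)"
proof -
  assume d: "distinct xs" and k: "k < length xs"
  have "take (Suc k) xs = take k xs @ [xs ! k]" using k by (simp add: take_Suc_conv_app_nth)
  moreover have "distinct (take (Suc k) xs)" using d by simp
  ultimately show ?thesis by simp
qed

context wormctx begin

definition ordD where "ordD D = (SOME xs. goodord D xs)"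
definition Zp where "Zp I J k = symdiff J (set (take k (ordD (symdiff I J))))"
definition eta where "eta I J k = symdiff I (set (take k (ordD (symdiff I J))))"
definition lenp where "lenp I J = length (ordD (symdiff I J))"

lemma C0_iff: "J \<in> Ck V E 0 \<longleftrightarrow> J \<subseteq> E \<and> bdry V J = {}"
  unfolding Ck_def using finB by auto

lemma path_good:
  assumes I: "I \<in> worm_space V E" and J: "J \<in> Ck V E 0"
  shows "goodord (symdiff I J) (ordD (symdiff I J))"
proof -
  have IE: "I \<subseteq> E" "card (bdry V I) \<le> 2" using I W_iff by auto
  have JE: "J \<subseteq> E" "bdry V J = {}" using J C0_iff by auto
  have D: "symdiff I J \<subseteq> E" using IE JE symdiff_sub by blast
  have "bdry V (symdiff I J) = bdry V I" using bdry_symdiff[of I J V] IE JE fin_sub by simp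
  then have "\<exists>xs. goodord (symdiff I J) xs" using order_exists[of "symdiff I J"] D fin_sub IE by simp
  then show ?thesis unfolding ordD_def by (rule someI_ex)
qed

lemma lenp_le: assumes "I \<in> worm_space V E" "J \<in> Ck V E 0" shows "lenp I J \<le> card E"
proof -
  have g: "goodord (symdiff I J) (ordD (symdiff I J))" by (rule path_good[OF assms])
  have "I \<subseteq> E" "J \<subseteq> E" using assms W_iff C0_iff by auto
  then have "symdiff I J \<subseteq> E" by (rule symdiff_sub)
  then have "card (symdiff I J) \<le> card E" using card_mono finE by blast
  then show ?thesis using g unfolding goodord_def lenp_def by (metis distinct_card)
qed

lemma take_sub:
  assumes "I \<in> worm_space V E" "J \<in> Ck V E 0"
  shows "set (take k (ordD (symdiff I J))) \<subseteq> symdiff I J"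
  using path_good[OF assms] unfolding goodord_def by (metis set_take_subset)

lemma take_bdry:
  assumes "I \<in> worm_space V E" "J \<in> Ck V E 0" "k \<le> lenp I J"
  shows "card (bdry V (set (take k (ordD (symdiff I J))))) \<le> 2"
  using path_good[OF assms(1,2)] assms(3) unfolding goodord_def lenp_def by blast

lemma IJ_sub: assumes "I \<in> worm_space V E" "J \<in> Ck V E 0" shows "I \<subseteq> E" "J \<subseteq> E" "symdiff I J \<subseteq> E"
proof -
  show "I \<subseteq> E" "J \<subseteq> E" using assms W_iff C0_iff by auto
  then show "symdiff I J \<subseteq> E" unfolding symdiff_def by blast
qed

lemma Zp_W:
  assumes I: "I \<in> worm_space V E" and J: "J \<in> Ck V E 0" and k: "k \<le> lenp I J"
  shows "Zp I J k \<in> worm_space V E"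
proof -
  let ?S = "set (take k (ordD (symdiff I J)))"
  have S: "?S \<subseteq> E" using take_sub[OF I J] IJ_sub[OF I J] by blast
  have JE: "J \<subseteq> E" "bdry V J = {}" using J C0_iff by auto
  have "bdry V (Zp I J k) = bdry V ?S" unfolding Zp_def using bdry_symdiff[of J ?S V] JE S fin_sub by simp
  then show ?thesis unfolding W_iff Zp_def using take_bdry[OF I J k] symdiff_sub[OF JE(1) S] by simp
qed

lemma Zp_0: "Zp I J 0 = J" unfolding Zp_def by simp

lemma Zp_end: assumes I: "I \<in> worm_space V E" and J: "J \<in> Ck V E 0" shows "Zp I J (lenp I J) = I"
proof -
  have "set (ordD (symdiff I J)) = symdiff I J" using path_good[OF I J] unfolding goodord_def by simp
  moreover have "symdiff J (symdiff I J) = I" unfolding symdiff_def by blast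
  ultimately show ?thesis unfolding Zp_def lenp_def by simp
qed

lemma step_edge:
  assumes I: "I \<in> worm_space V E" and J: "J \<in> Ck V E 0" and k: "k < lenp I J"
  shows "ordD (symdiff I J) ! k \<in> E"
proof -
  have "ordD (symdiff I J) ! k \<in> set (ordD (symdiff I J))" using k unfolding lenp_def by simp
  then show ?thesis using path_good[OF I J] IJ_sub[OF I J] unfolding goodord_def by blast
qed

lemma Zp_Suc:
  assumes I: "I \<in> worm_space V E" and J: "J \<in> Ck V E 0" and k: "k < lenp I J"
  shows "Zp I J (Suc k) = flip (Zp I J k) (ordD (symdiff I J) ! k)"
proof -
  let ?xs = "ordD (symdiff I J)"
  have d: "distinct ?xs" using path_good[OF I J] unfolding goodord_def by simp
  have k': "k < length ?xs" using k unfolding lenp_def .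
  have t: "set (take (Suc k) ?xs) = insert (?xs ! k) (set (take k ?xs))"
    using k' by (simp add: take_Suc_conv_app_nth)
  have n: "?xs ! k \<notin> set (take k ?xs)" by (rule distinct_nth_notin_take[OF d k'])
  show ?thesis unfolding Zp_def flip_def t using n unfolding symdiff_def by blast
qed

lemma card_ind: "X \<subseteq> E \<Longrightarrow> card X = (\<Sum>e\<in>E. if e \<in> X then 1 else 0::nat)"
proof -
  assume X: "X \<subseteq> E"
  have "(\<Sum>e\<in>E. if e \<in> X then 1 else 0::nat) = card (E \<inter> {e. e \<in> X})"
    using finE by (simp add: sum.If_cases)
  also have "E \<inter> {e. e \<in> X} = X" using X by blast
  finally show ?thesis by simp
qed

lemma lam_swap:
  assumes IE: "I \<subseteq> E" and JE: "J \<subseteq> E" and S: "S \<subseteq> symdiff I J"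
  shows "wt w M I * wt w M J = wt w M (symdiff J S) * wt w M (symdiff I S)"
proof -
  have SE: "S \<subseteq> E" using S symdiff_sub[OF IE JE] by blast
  have sub: "symdiff I M \<subseteq> E" "symdiff J M \<subseteq> E" "symdiff (symdiff J S) M \<subseteq> E" "symdiff (symdiff I S) M \<subseteq> E"
    using IE JE SE ME unfolding symdiff_def by blast+
  have pt: "(if e \<in> symdiff I M then 1 else 0::nat) + (if e \<in> symdiff J M then 1 else 0)
      = (if e \<in> symdiff (symdiff J S) M then 1 else 0) + (if e \<in> symdiff (symdiff I S) M then 1 else 0)" for e
  proof -
    have "e \<in> S \<Longrightarrow> (e \<in> I) \<noteq> (e \<in> J)" using S unfolding symdiff_def by blast
    then show ?thesis by (cases "e \<in> S"; cases "e \<in> I"; cases "e \<in> J"; cases "e \<in> M") (simp_all add: symdiff_def)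
  qed
  have "card (symdiff I M) + card (symdiff J M) = card (symdiff (symdiff J S) M) + card (symdiff (symdiff I S) M)"
    unfolding card_ind[OF sub(1)] card_ind[OF sub(2)] card_ind[OF sub(3)] card_ind[OF sub(4)]
    by (simp only: sum.distrib[symmetric] pt)
  then show ?thesis unfolding wt_def by (metis power_add)
qed

definition Psi where "Psi A = (if A \<in> Ck V E 0 then real (card V) else 2)"
definition phi where "phi A = (if card (bdry V A) \<le> 2 then real (card V) else 2)"

lemma eta_props:
  assumes I: "I \<in> worm_space V E" and J: "J \<in> Ck V E 0" and k: "k \<le> lenp I J"
  shows "eta I J k \<in> Ck V E 0 \<union> Ck V E 2 \<union> Ck V E 4" "Psi I \<le> phi (eta I J k)"
proof -
  let ?S = "set (take k (ordD (symdiff I J)))"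
  have S: "?S \<subseteq> E" using take_sub[OF I J] IJ_sub[OF I J] by blast
  have IE: "I \<subseteq> E" "card (bdry V I) \<le> 2" using I W_iff by auto
  have b: "bdry V (eta I J k) = symdiff (bdry V I) (bdry V ?S)"
    unfolding eta_def using bdry_symdiff[of I ?S V] IE S fin_sub by simp
  have cS: "card (bdry V ?S) \<le> 2" by (rule take_bdry[OF I J k])
  have c4: "card (bdry V (eta I J k)) \<le> 4" unfolding b using card_symdiff_le[OF finB[of I] finB[of ?S]] IE cS by linarith
  have etaE: "eta I J k \<subseteq> E" unfolding eta_def using IE S symdiff_sub by blast
  have ev: "even (card (bdry V (eta I J k)))" by (rule bdry_even[OF etaE])
  have "card (bdry V (eta I J k)) = 0 \<or> card (bdry V (eta I J k)) = 2 \<or> card (bdry V (eta I J k)) = 4"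
    using c4 ev by presburger
  then show "eta I J k \<in> Ck V E 0 \<union> Ck V E 2 \<union> Ck V E 4" unfolding Ck_def using etaE by auto
  show "Psi I \<le> phi (eta I J k)"
  proof (cases "card (bdry V (eta I J k)) \<le> 2")
    case True
    then show ?thesis unfolding Psi_def phi_def using cardV2 by auto
  next
    case False
    have "bdry V I \<noteq> {}"
    proof
      assume "bdry V I = {}"
      then have "bdry V (eta I J k) = bdry V ?S" unfolding b by simp
      then show False using False cS by simp
    qed
    then have "I \<notin> Ck V E 0" unfolding Ck_def using finB by auto
    then show ?thesis unfolding Psi_def phi_def using False by simp
  qed
qed

lemma lam_path:
  assumes I: "I \<in> worm_space V E" and J: "J \<in> Ck V E 0"
  shows "wt w M I * wt w M J = wt w M (Zp I J k) * wt w M (eta I J k)"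
  unfolding Zp_def eta_def by (rule lam_swap[OF IJ_sub(1,2)[OF I J] take_sub[OF I J]])

lemma eta_inj:
  assumes I: "I \<in> worm_space V E" and J: "J \<in> Ck V E 0" and k: "k < lenp I J"
    and I': "I' \<in> worm_space V E" and J': "J' \<in> Ck V E 0" and k': "k' < lenp I' J'"
    and Z: "Zp I J k = Zp I' J' k'" and Z': "Zp I J (Suc k) = Zp I' J' (Suc k')"
    and et: "eta I J k = eta I' J' k'"
  shows "I = I' \<and> J = J' \<and> k = k'"
proof -
  have D1: "symdiff (Zp I J k) (eta I J k) = symdiff I J"
    unfolding Zp_def eta_def symdiff_def by blast
  have D2: "symdiff (Zp I' J' k') (eta I' J' k') = symdiff I' J'"
    unfolding Zp_def eta_def symdiff_def by blast
  have D: "symdiff I J = symdiff I' J'" using D1 D2 Z et by simp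
  let ?xs = "ordD (symdiff I J)"
  have xs': "ordD (symdiff I' J') = ?xs" using D by simp
  have "flip (Zp I J k) (?xs ! k) = flip (Zp I J k) (?xs ! k')"
    using Z' Zp_Suc[OF I J k] Zp_Suc[OF I' J' k'] Z xs' by simp
  then have "{?xs ! k} = {?xs ! k'}" unfolding flip_def by (rule symdiff_inj)
  then have nth: "?xs ! k = ?xs ! k'" by simp
  have d: "distinct ?xs" using path_good[OF I J] unfolding goodord_def by simp
  have "k' < length ?xs" using k' xs' unfolding lenp_def by simp
  moreover have "k < length ?xs" using k unfolding lenp_def by simp
  ultimately have kk: "k = k'" using nth d by (simp add: nth_eq_iff_index_eq)
  have "J = symdiff (Zp I J k) (set (take k ?xs))" unfolding Zp_def by (simp add: symdiff_cancel2)
  moreover have "J' = symdiff (Zp I' J' k') (set (take k' ?xs))" unfolding Zp_def using xs' by (simp add: symdiff_cancel2)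
  ultimately have JJ: "J = J'" using Z kk by simp
  have "I = I'" using D JJ by (metis symdiff_cancel2)
  then show ?thesis using JJ kk by simp
qed

end


lemma min_swap:
  fixes a b r :: real
  assumes "a > 0" "b > 0" "r > 0"
  shows "min (a / b * r) 1 * (1 / (4 * a)) = r * (min (b / a * inverse r) 1 * (1 / (4 * b)))"
proof (cases "a * r \<le> b")
  case True
  then have "a / b * r \<le> 1" using assms by (simp add: field_simps)
  moreover have "b / a * inverse r \<ge> 1" using True assms by (simp add: field_simps)
  ultimately show ?thesis using assms by (simp add: min_def field_simps)
next
  case False
  then have "a / b * r > 1" using assms by (simp add: field_simps)
  moreover have "b / a * inverse r < 1" using False assms by (simp add: field_simps)
  ultimately show ?thesis using assms by (simp add: min_def field_simps)
qed

context wormctx begin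

definition fl where "fl A e = (if e \<notin> symdiff A M then w else 1)"
definition rr where "rr A e = (if e \<notin> symdiff A M then w else inverse w)"
definition sdeg where "sdeg e = (\<Sum>x\<in>e. 1 / real (deg E x))"

lemma symdiff_flip: "symdiff A (flip A e) = {e}" unfolding flip_def symdiff_def by blast
lemma flip_flip: "flip (flip A e) e = A" unfolding flip_def symdiff_def by blast

lemma off_flip:
  assumes A: "A \<in> worm_space V E" and B: "flip A e \<in> worm_space V E" and e: "e \<in> E"
  shows "worm_off V E w M A (flip A e) =
    (if A \<in> Ck V E 0 then fl A e * (1 / (2 * real (card V))) * sdeg e
     else if flip A e \<in> Ck V E 0 then fl A e * (1/4) * sdeg e
     else (let u = the_elem (e \<inter> bdry V A); v = the_elem (e - {u}) in
              min (real (deg E u) / real (deg E v) * rr A e) 1 * (1 / (4 * real (deg E u)))))"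
  unfolding worm_off_def symdiff_flip fl_def rr_def sdeg_def using A B e
  by (auto simp: Let_def)

lemma off_nonneg: "worm_off V E w M A B \<ge> 0"
  unfolding worm_off_def Let_def using w0
  by (auto intro!: mult_nonneg_nonneg sum_nonneg divide_nonneg_nonneg)

lemma W_cases: "A \<in> worm_space V E \<Longrightarrow> A \<notin> Ck V E 0 \<Longrightarrow> card (bdry V A) = 2"
  unfolding worm_space_def Ck_def by auto

lemma C0_flip: assumes "A \<in> Ck V E 0" "e \<in> E" shows "flip A e \<notin> Ck V E 0"
proof -
  have "bdry V (flip A e) = e" using assms bdry_flip[of A e] C0_iff by auto
  then show ?thesis using C0_iff card_edge[OF assms(2)] by auto
qed

lemma C20: assumes A: "A \<in> worm_space V E" and "A \<notin> Ck V E 0" and "flip A e \<in> Ck V E 0" and e: "e \<in> E"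
  shows "bdry V A = e"
proof -
  have "bdry V (flip A e) = {}" using assms C0_iff by auto
  moreover have "bdry V (flip A e) = symdiff (bdry V A) e" using bdry_flip[of A e] A e W_iff by auto
  ultimately show ?thesis unfolding symdiff_def by blast
qed

lemma C22:
  assumes A: "A \<in> worm_space V E" and B: "flip A e \<in> worm_space V E" and e: "e \<in> E"
    and nA: "A \<notin> Ck V E 0" and nB: "flip A e \<notin> Ck V E 0"
  shows "\<exists>u v. e = {u, v} \<and> u \<noteq> v \<and> e \<inter> bdry V A = {u} \<and> e \<inter> bdry V (flip A e) = {v}"
proof -
  have cA: "card (bdry V A) = 2" using W_cases[OF A nA] .
  have cB: "card (bdry V (flip A e)) = 2" using W_cases[OF B nB] .
  have bB: "bdry V (flip A e) = symdiff (bdry V A) e" using bdry_flip[of A e] A e W_iff by auto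
  have fe: "finite e" using finite_subset[OF edge_sub[OF e] finV] .
  have cs: "card (symdiff (bdry V A) e) + 2 * card (bdry V A \<inter> e) = 4"
    using card_symdiff[OF finB fe, of A] cA card_edge[OF e] by simp
  obtain a b where ab: "e = {a, b}" "a \<noteq> b" using edgeE[OF e] by metis
  have "card (bdry V A \<inter> e) = 1" using cs cB bB by simp
  then obtain c where c: "bdry V A \<inter> e = {c}" by (metis card_1_singletonE)
  have "c = a \<or> c = b" using c ab by blast
  then show ?thesis
  proof
    assume "c = a"
    have "e \<inter> bdry V A = {a}" using c \<open>c = a\<close> by blast
    moreover have "e \<inter> bdry V (flip A e) = {b}"
    proof -
      have be: "b \<in> e" "a \<in> e" using ab(1) by simp_all
      have X1: "a \<in> bdry V A" using c \<open>c = a\<close> by blast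
      have X2: "b \<notin> bdry V A"
      proof
        assume "b \<in> bdry V A"
        then have "b \<in> bdry V A \<inter> e" using be by blast
        then have "b = c" using c by blast
        then show False using \<open>c = a\<close> ab(2) by simp
      qed
      note X = X1 X2
      show ?thesis using X ab(2) by (subst bB) (auto simp: symdiff_def ab(1))
    qed
    ultimately show ?thesis using ab by blast
  next
    assume "c = b"
    have "e \<inter> bdry V A = {b}" using c \<open>c = b\<close> by blast
    moreover have "e \<inter> bdry V (flip A e) = {a}"
    proof -
      have be: "b \<in> e" "a \<in> e" using ab(1) by simp_all
      have X1: "b \<in> bdry V A" using c \<open>c = b\<close> by blast
      have X2: "a \<notin> bdry V A"
      proof
        assume "a \<in> bdry V A"
        then have "a \<in> bdry V A \<inter> e" using be by blast
        then have "a = c" using c by blast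
        then show False using \<open>c = b\<close> ab(2) by simp
      qed
      note X = X1 X2
      show ?thesis using X ab(2) by (subst bB) (auto simp: symdiff_def ab(1))
    qed
    moreover have "e = {b, a}" "b \<noteq> a" using ab by auto
    ultimately show ?thesis by blast
  qed
qed

lemma lam_flip:
  assumes A: "A \<subseteq> E" and e: "e \<in> E"
  shows "wt w M (flip A e) = wt w M A * rr A e"
proof -
  have f: "finite (symdiff A M)" using symdiff_finite fin_sub A ME by blast
  show ?thesis
  proof (cases "e \<in> symdiff A M")
    case False
    have "symdiff (flip A e) M = insert e (symdiff A M)" using False unfolding flip_def symdiff_def by blast
    then have "card (symdiff (flip A e) M) = Suc (card (symdiff A M))" using f False by simp
    then show ?thesis unfolding wt_def rr_def using False by simp
  next
    case True
    have "symdiff (flip A e) M = symdiff A M - {e}" using True unfolding flip_def symdiff_def by blast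
    then have c: "Suc (card (symdiff (flip A e) M)) = card (symdiff A M)"
      using card_Suc_Diff1[OF f True] by simp
    have "wt w M A = wt w M (flip A e) * w" unfolding wt_def using c[symmetric] by simp
    then show ?thesis unfolding rr_def using True w0 by (simp add: field_simps)
  qed
qed

lemma ind_flip: "(e \<notin> symdiff (flip A e) M) \<longleftrightarrow> (e \<in> symdiff A M)"
  unfolding flip_def symdiff_def by blast

lemma wt_pos: "wt w M A > 0" unfolding wt_def using w0 by simp

definition pis where "pis A = Psi A * wt w M A"

lemma rev_C0:
  assumes A: "A \<in> Ck V E 0" and B: "flip A e \<in> worm_space V E" and e: "e \<in> E"
  shows "pis A * worm_off V E w M A (flip A e) = pis (flip A e) * worm_off V E w M (flip A e) A"
proof -
  let ?B = "flip A e"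
  have AW: "A \<in> worm_space V E" using A unfolding worm_space_def by simp
  have nB: "?B \<notin> Ck V E 0" by (rule C0_flip[OF A e])
  have l: "worm_off V E w M A ?B = fl A e * (1 / (2 * real (card V))) * sdeg e"
    using off_flip[OF AW B e] A by simp
  have r0: "worm_off V E w M ?B (flip ?B e) = fl ?B e * (1/4) * sdeg e"
    using off_flip[OF B _ e] flip_flip[of A e] AW nB A by simp
  have r: "worm_off V E w M ?B A = fl ?B e * (1/4) * sdeg e" using r0 flip_flip[of A e] by simp
  have AE: "A \<subseteq> E" using AW W_iff by auto
  have V0: "real (card V) > 0" using cardV2 by simp
  show ?thesis
    unfolding l r pis_def Psi_def using A nB lam_flip[OF AE e] V0 w0
    by (cases "e \<in> symdiff A M") (auto simp: fl_def rr_def ind_flip field_simps)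
qed

lemma rev_flip:
  assumes A: "A \<in> worm_space V E" and B: "flip A e \<in> worm_space V E" and e: "e \<in> E"
  shows "pis A * worm_off V E w M A (flip A e) = pis (flip A e) * worm_off V E w M (flip A e) A"
proof (cases "A \<in> Ck V E 0")
  case True
  then show ?thesis by (rule rev_C0[OF _ B e])
next
  case nA: False
  let ?B = "flip A e"
  show ?thesis
  proof (cases "?B \<in> Ck V E 0")
    case True
    have "pis ?B * worm_off V E w M ?B (flip ?B e) = pis (flip ?B e) * worm_off V E w M (flip ?B e) ?B"
      by (rule rev_C0[OF True _ e]) (simp add: flip_flip A)
    then show ?thesis by (simp add: flip_flip)
  next
    case nB: False
    obtain u v where uv: "e = {u, v}" "u \<noteq> v" "e \<inter> bdry V A = {u}" "e \<inter> bdry V ?B = {v}"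
      using C22[OF A B e nA nB] by blast
    have e1: "e - {u} = {v}" "e - {v} = {u}" using uv(1,2) by auto
    have ue: "the_elem (e \<inter> bdry V A) = u" "the_elem (e - {u}) = v" using uv(3) e1 by simp_all
    have ve: "the_elem (e \<inter> bdry V ?B) = v" "the_elem (e - {v}) = u" using uv(4) e1 by simp_all
    have l: "worm_off V E w M A ?B = min (real (deg E u) / real (deg E v) * rr A e) 1 * (1 / (4 * real (deg E u)))"
      using off_flip[OF A B e] nA nB ue by (simp add: Let_def)
    have r0: "worm_off V E w M ?B (flip ?B e) = min (real (deg E v) / real (deg E u) * rr ?B e) 1 * (1 / (4 * real (deg E v)))"
      using off_flip[OF B _ e] flip_flip[of A e] A nA nB ve by (simp add: Let_def)
    have r: "worm_off V E w M ?B A = min (real (deg E v) / real (deg E u) * rr ?B e) 1 * (1 / (4 * real (deg E v)))"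
      using r0 flip_flip[of A e] by simp
    have rB: "rr ?B e = inverse (rr A e)" unfolding rr_def using ind_flip[of e A] by auto
    have AE: "A \<subseteq> E" using A W_iff by auto
    have "u \<in> e" "v \<in> e" using uv(1) by auto
    then have "deg E u \<ge> 1" "deg E v \<ge> 1" using deg_pos[OF e] by auto
    then have du: "real (deg E u) > 0" "real (deg E v) > 0" by auto
    have rp: "rr A e > 0" unfolding rr_def using w0 by auto
    have "pis A * worm_off V E w M A ?B = 2 * wt w M A * (min (real (deg E u) / real (deg E v) * rr A e) 1 * (1 / (4 * real (deg E u))))"
      unfolding pis_def Psi_def l using nA by simp
    also have "\<dots> = 2 * wt w M A * (rr A e * (min (real (deg E v) / real (deg E u) * inverse (rr A e)) 1 * (1 / (4 * real (deg E v)))))"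
      using min_swap[OF du rp] by simp
    also have "\<dots> = pis ?B * worm_off V E w M ?B A"
      unfolding pis_def Psi_def r rB using nB lam_flip[OF AE e] by simp
    finally show ?thesis .
  qed
qed

end


context wormctx begin

abbreviation DD where "DD \<equiv> real Delta"

lemma DD1: "DD \<ge> 1" using Delta_pos by simp

lemma inv_deg: "e \<in> E \<Longrightarrow> x \<in> e \<Longrightarrow> 1 / real (deg E x) \<ge> 1 / DD \<and> 1 / real (deg E x) \<le> 1"
proof -
  assume "e \<in> E" "x \<in> e"
  then have d: "1 \<le> deg E x" "deg E x \<le> Delta" using deg_bounds by auto
  then have "1 / real (deg E x) \<ge> 1 / DD" by (intro divide_left_mono) auto
  moreover have "1 / real (deg E x) \<le> 1" using d by simp
  ultimately show ?thesis by simp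
qed

lemma sdeg_low: assumes e: "e \<in> E" shows "sdeg e \<ge> 2 / DD"
proof -
  have "(\<Sum>x\<in>e. 1 / DD) \<le> sdeg e" unfolding sdeg_def by (intro sum_mono) (use inv_deg[OF e] in auto)
  then show ?thesis using card_edge[OF e] by simp
qed

lemma sdeg_nonneg: "sdeg e \<ge> 0" unfolding sdeg_def by (intro sum_nonneg) simp

lemma fl_bounds: "w \<le> fl A e \<and> fl A e \<le> 1" unfolding fl_def using w1 by auto
lemma rr_low: "rr A e \<ge> w"
proof -
  have "inverse w > 1" using w0 w1 by (simp add: one_less_inverse)
  then show ?thesis unfolding rr_def using w1 by auto
qed

lemma off_low:
  assumes A: "A \<in> worm_space V E" and B: "flip A e \<in> worm_space V E" and e: "e \<in> E"
  shows "pis A * worm_off V E w M A (flip A e) \<ge> w * wt w M A / (2 * DD)"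
proof -
  have V0: "real (card V) > 0" using cardV2 by simp
  have lp: "wt w M A > 0" by (rule wt_pos)
  have D0: "DD > 0" using DD1 by simp
  show ?thesis
  proof (cases "A \<in> Ck V E 0")
    case True
    have o: "worm_off V E w M A (flip A e) = fl A e * (1 / (2 * real (card V))) * sdeg e"
      using off_flip[OF A B e] True by simp
    have "fl A e * (1 / (2 * real (card V))) * sdeg e \<ge> w * (1 / (2 * real (card V))) * (2 / DD)"
      by (intro mult_mono) (use fl_bounds[of A e] sdeg_low[OF e] V0 w0 D0 sdeg_nonneg[of e] in auto)
    then have o2: "worm_off V E w M A (flip A e) \<ge> w * (1 / (2 * real (card V))) * (2 / DD)" unfolding o .
    have pp: "pis A \<ge> 0" unfolding pis_def Psi_def using V0 lp by simp
    have "pis A * worm_off V E w M A (flip A e) \<ge> pis A * (w * (1 / (2 * real (card V))) * (2 / DD))"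
      by (rule mult_left_mono[OF o2 pp])
    moreover have "pis A * (w * (1 / (2 * real (card V))) * (2 / DD)) = w * wt w M A / DD"
      unfolding pis_def Psi_def using True V0 D0 by (simp add: field_simps)
    moreover have "w * wt w M A / DD \<ge> w * wt w M A / (2 * DD)"
      using w0 lp D0 by (simp add: divide_left_mono)
    ultimately show ?thesis by linarith
  next
    case nA: False
    have pA: "pis A = 2 * wt w M A" unfolding pis_def Psi_def using nA by simp
    have "worm_off V E w M A (flip A e) \<ge> w / (4 * DD)"
    proof (cases "flip A e \<in> Ck V E 0")
      case True
      have o: "worm_off V E w M A (flip A e) = fl A e * (1/4) * sdeg e"
        using off_flip[OF A B e] True nA by simp
      have "fl A e * (1/4) * sdeg e \<ge> w * (1/4) * (2 / DD)"
        by (intro mult_mono) (use fl_bounds[of A e] sdeg_low[OF e] w0 D0 sdeg_nonneg[of e] in auto)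
      moreover have "w * (1/4) * (2 / DD) \<ge> w / (4 * DD)" using w0 D0 by (simp add: field_simps)
      ultimately show ?thesis unfolding o by linarith
    next
      case nB: False
      obtain u v where uv: "e = {u, v}" "u \<noteq> v" "e \<inter> bdry V A = {u}" "e \<inter> bdry V (flip A e) = {v}"
        using C22[OF A B e nA nB] by blast
      have e1: "e - {u} = {v}" using uv(1,2) by auto
      have ue: "the_elem (e \<inter> bdry V A) = u" "the_elem (e - {u}) = v" using uv(3) e1 by simp_all
      have o: "worm_off V E w M A (flip A e) = min (real (deg E u) / real (deg E v) * rr A e) 1 * (1 / (4 * real (deg E u)))"
        using off_flip[OF A B e] nA nB ue by (simp add: Let_def)
      have "u \<in> e" "v \<in> e" using uv(1) by auto
      then have du: "1 \<le> real (deg E u)" "real (deg E u) \<le> DD" "1 \<le> real (deg E v)" "real (deg E v) \<le> DD"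
        using deg_bounds[OF e] by auto
      have r: "rr A e \<ge> w" by (rule rr_low)
      show ?thesis
      proof (cases "real (deg E u) / real (deg E v) * rr A e \<le> 1")
        case True
        then have "worm_off V E w M A (flip A e) = rr A e / (4 * real (deg E v))"
          unfolding o using du by (simp add: field_simps)
        moreover have "rr A e / (4 * real (deg E v)) \<ge> w / (4 * DD)"
          by (intro frac_le) (use du r w0 in auto)
        ultimately show ?thesis by simp
      next
        case False
        then have "worm_off V E w M A (flip A e) = 1 / (4 * real (deg E u))" unfolding o by simp
        moreover have "1 / (4 * real (deg E u)) \<ge> w / (4 * DD)"
          by (intro frac_le) (use du w0 w1 in auto)
        ultimately show ?thesis by simp
      qed
    qed
    then have "2 * wt w M A * (w / (4 * DD)) \<le> 2 * wt w M A * worm_off V E w M A (flip A e)"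
      by (rule mult_left_mono) (use lp in simp)
    then have "pis A * worm_off V E w M A (flip A e) \<ge> 2 * wt w M A * (w / (4 * DD))"
      unfolding pA .
    moreover have "2 * wt w M A * (w / (4 * DD)) = w * wt w M A / (2 * DD)" by (simp add: field_simps)
    ultimately show ?thesis by linarith
  qed
qed

definition bnd where "bnd A e = (if A \<in> Ck V E 0 then (1 / (2 * real (card V))) * sdeg e
                                 else (\<Sum>x\<in>e \<inter> bdry V A. 1 / (4 * real (deg E x))))"

lemma bnd_nonneg: "bnd A e \<ge> 0" unfolding bnd_def using sdeg_nonneg by (auto intro!: sum_nonneg)

lemma off_le_bnd:
  assumes A: "A \<in> worm_space V E" and B: "flip A e \<in> worm_space V E" and e: "e \<in> E"
  shows "worm_off V E w M A (flip A e) \<le> bnd A e"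
proof (cases "A \<in> Ck V E 0")
  case True
  have o: "worm_off V E w M A (flip A e) = fl A e * (1 / (2 * real (card V))) * sdeg e"
    using off_flip[OF A B e] True by simp
  have "fl A e * sdeg e \<le> sdeg e" using fl_bounds[of A e] sdeg_nonneg[of e] w0
    by (intro mult_left_le_one_le) auto
  then have "fl A e * sdeg e * (1 / (2 * real (card V))) \<le> sdeg e * (1 / (2 * real (card V)))"
    by (rule mult_right_mono) simp
  then show ?thesis unfolding o bnd_def using True by (simp add: mult_ac)
next
  case nA: False
  show ?thesis
  proof (cases "flip A e \<in> Ck V E 0")
    case True
    have o: "worm_off V E w M A (flip A e) = fl A e * (1/4) * sdeg e"
      using off_flip[OF A B e] True nA by simp
    have be: "bdry V A = e" by (rule C20[OF A nA True e])
    have "bnd A e = (\<Sum>x\<in>e. 1 / (4 * real (deg E x)))" unfolding bnd_def using nA be by simp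
    also have "\<dots> = (1/4) * sdeg e" unfolding sdeg_def by (simp add: sum_distrib_left)
    finally have b: "bnd A e = (1/4) * sdeg e" .
    have "fl A e * sdeg e \<le> sdeg e" using fl_bounds[of A e] sdeg_nonneg[of e] w0
      by (intro mult_left_le_one_le) auto
    then show ?thesis unfolding o b by simp
  next
    case nB: False
    obtain u v where uv: "e = {u, v}" "u \<noteq> v" "e \<inter> bdry V A = {u}" "e \<inter> bdry V (flip A e) = {v}"
      using C22[OF A B e nA nB] by blast
    have e1: "e - {u} = {v}" using uv(1,2) by auto
    have ue: "the_elem (e \<inter> bdry V A) = u" "the_elem (e - {u}) = v" using uv(3) e1 by simp_all
    have o: "worm_off V E w M A (flip A e) = min (real (deg E u) / real (deg E v) * rr A e) 1 * (1 / (4 * real (deg E u)))"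
      using off_flip[OF A B e] nA nB ue by (simp add: Let_def)
    have b: "bnd A e = 1 / (4 * real (deg E u))" unfolding bnd_def using nA uv(3) by simp
    have "min (real (deg E u) / real (deg E v) * rr A e) 1 * (1 / (4 * real (deg E u))) \<le> 1 * (1 / (4 * real (deg E u)))"
      by (rule mult_right_mono) simp_all
    then show ?thesis unfolding o b by simp
  qed
qed

lemma swap_sum:
  assumes X: "X \<subseteq> V"
  shows "(\<Sum>e\<in>E. \<Sum>x\<in>e \<inter> X. f x) = (\<Sum>x\<in>X. real (deg E x) * f x)"
proof -
  have fX: "finite X" using finite_subset[OF X finV] .
  have "(\<Sum>e\<in>E. \<Sum>x\<in>e \<inter> X. f x) = (\<Sum>e\<in>E. \<Sum>x\<in>{x \<in> X. x \<in> e}. f x)"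
    by (intro sum.cong) auto
  also have "\<dots> = (\<Sum>x\<in>X. \<Sum>e\<in>{e \<in> E. x \<in> e}. f x)"
    using sum.swap_restrict[OF finE fX, of "\<lambda>e x. f x" "\<lambda>e x. x \<in> e"] by simp
  also have "\<dots> = (\<Sum>x\<in>X. real (deg E x) * f x)" unfolding deg_def by simp
  finally show ?thesis .
qed

lemma sum_bnd: assumes A: "A \<in> worm_space V E" shows "(\<Sum>e\<in>E. bnd A e) \<le> 1/2"
proof (cases "A \<in> Ck V E 0")
  case True
  have V0: "real (card V) > 0" using cardV2 by simp
  have "(\<Sum>e\<in>E. bnd A e) = (1 / (2 * real (card V))) * (\<Sum>e\<in>E. \<Sum>x\<in>e \<inter> V. 1 / real (deg E x))"
    unfolding bnd_def sdeg_def using True edge_sub by (simp add: sum_distrib_left Int_absorb2)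
  also have "(\<Sum>e\<in>E. \<Sum>x\<in>e \<inter> V. 1 / real (deg E x)) = (\<Sum>x\<in>V. real (deg E x) * (1 / real (deg E x)))"
    by (rule swap_sum) simp
  finally have eq: "(\<Sum>e\<in>E. bnd A e) = (1 / (2 * real (card V))) * (\<Sum>x\<in>V. real (deg E x) * (1 / real (deg E x)))" .
  have "(\<Sum>x\<in>V. real (deg E x) * (1 / real (deg E x))) \<le> (\<Sum>x\<in>V. 1)" by (intro sum_mono) simp
  also have "\<dots> = real (card V)" by simp
  finally have le: "(\<Sum>x\<in>V. real (deg E x) * (1 / real (deg E x))) \<le> real (card V)" .
  have "(1 / (2 * real (card V))) * (\<Sum>x\<in>V. real (deg E x) * (1 / real (deg E x))) \<le> (1 / (2 * real (card V))) * real (card V)"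
    by (rule mult_left_mono[OF le]) (use V0 in simp)
  moreover have "(1 / (2 * real (card V))) * real (card V) = 1/2" using V0 by simp
  ultimately show ?thesis using eq by linarith
next
  case False
  have c2: "card (bdry V A) = 2" by (rule W_cases[OF A False])
  have "(\<Sum>e\<in>E. bnd A e) = (\<Sum>e\<in>E. \<Sum>x\<in>e \<inter> bdry V A. 1 / (4 * real (deg E x)))"
    unfolding bnd_def using False by simp
  also have "\<dots> = (\<Sum>x\<in>bdry V A. real (deg E x) * (1 / (4 * real (deg E x))))"
    by (rule swap_sum[OF bdry_sub])
  also have "\<dots> \<le> (\<Sum>x\<in>bdry V A. 1/4)" by (intro sum_mono) simp
  also have "\<dots> = 1/2" using c2 by simp
  finally show ?thesis .
qed

lemma off_sum:
  assumes A: "A \<in> worm_space V E"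
  shows "(\<Sum>C\<in>worm_space V E - {A}. worm_off V E w M A C) \<le> 1/2"
proof -
  define EA where "EA = {e \<in> E. flip A e \<in> worm_space V E}"
  have AE: "A \<subseteq> E" using A W_iff by auto
  have sub: "flip A ` EA \<subseteq> worm_space V E - {A}"
  proof
    fix C assume "C \<in> flip A ` EA"
    then obtain e where e: "e \<in> EA" "C = flip A e" by blast
    have "C \<noteq> A" using e unfolding flip_def symdiff_def by blast
    then show "C \<in> worm_space V E - {A}" using e unfolding EA_def by simp
  qed
  have zero: "worm_off V E w M A C = 0" if C: "C \<in> worm_space V E - {A} - flip A ` EA" for C
  proof (rule ccontr)
    assume "worm_off V E w M A C \<noteq> 0"
    then obtain e where e: "e \<in> E" "symdiff A C = {e}"
      unfolding worm_off_def by (auto split: if_splits)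
    have "C = flip A e" unfolding flip_def using e(2) symdiff_cancel[of A C] by simp
    then have "C \<in> flip A ` EA" using C e(1) unfolding EA_def by auto
    then show False using C by blast
  qed
  have fW: "finite (worm_space V E - {A})" using finW by simp
  have "(\<Sum>C\<in>worm_space V E - {A}. worm_off V E w M A C) = (\<Sum>C\<in>flip A ` EA. worm_off V E w M A C)"
    by (rule sum.mono_neutral_right[OF fW sub]) (use zero in blast)
  also have "\<dots> = (\<Sum>e\<in>EA. worm_off V E w M A (flip A e))"
  proof (rule sum.reindex[unfolded comp_def])
    show "inj_on (flip A) EA" unfolding inj_on_def flip_def by (metis symdiff_inj singleton_inject)
  qed
  also have "\<dots> \<le> (\<Sum>e\<in>EA. bnd A e)"
    by (intro sum_mono off_le_bnd[OF A]) (auto simp: EA_def)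
  also have "\<dots> \<le> (\<Sum>e\<in>E. bnd A e)"
    by (rule sum_mono2[OF finE]) (auto simp: EA_def bnd_nonneg)
  also have "\<dots> \<le> 1/2" by (rule sum_bnd[OF A])
  finally show ?thesis .
qed

lemma P_rowsum: "A \<in> worm_space V E \<Longrightarrow> (\<Sum>C\<in>worm_space V E. worm_P V E w M A C) = 1"
proof -
  assume A: "A \<in> worm_space V E"
  have "(\<Sum>C\<in>worm_space V E. worm_P V E w M A C) = worm_P V E w M A A + (\<Sum>C\<in>worm_space V E - {A}. worm_P V E w M A C)"
    using A finW by (simp add: sum.remove)
  also have "(\<Sum>C\<in>worm_space V E - {A}. worm_P V E w M A C) = (\<Sum>C\<in>worm_space V E - {A}. worm_off V E w M A C)"
    by (intro sum.cong) (auto simp: worm_P_def)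
  finally show ?thesis by (simp add: worm_P_def)
qed

lemma P_nonneg: "A \<noteq> C \<Longrightarrow> worm_P V E w M A C \<ge> 0"
  unfolding worm_P_def using off_nonneg by simp

lemma P_lazy: "A \<in> worm_space V E \<Longrightarrow> worm_P V E w M A A \<ge> 1/2"
  unfolding worm_P_def using off_sum by simp

lemma P_rev:
  assumes A: "A \<in> worm_space V E" and C: "C \<in> worm_space V E"
  shows "pis A * worm_P V E w M A C = pis C * worm_P V E w M C A"
proof (cases "A = C")
  case True then show ?thesis by simp
next
  case False
  then have PP: "worm_P V E w M A C = worm_off V E w M A C" "worm_P V E w M C A = worm_off V E w M C A"
    unfolding worm_P_def by auto
  show ?thesis
  proof (cases "\<exists>e\<in>E. symdiff A C = {e}")
    case True
    then obtain e where e: "e \<in> E" "symdiff A C = {e}" by blast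
    have Cf: "C = flip A e" unfolding flip_def using e(2) symdiff_cancel[of A C] by simp
    show ?thesis using rev_flip[OF A _ e(1)] C Cf PP by simp
  next
    case False
    then have "\<not> (\<exists>e\<in>E. symdiff C A = {e})" by (simp add: symdiff_comm)
    then show ?thesis unfolding PP worm_off_def using False by simp
  qed
qed

end


lemma jensen_sq:
  fixes p f :: "'b \<Rightarrow> real"
  assumes fin: "finite A" and p: "\<And>a. a \<in> A \<Longrightarrow> p a \<ge> 0" and s: "(\<Sum>a\<in>A. p a) = 1"
  shows "(\<Sum>a\<in>A. p a * f a)^2 \<le> (\<Sum>a\<in>A. p a * (f a)^2)"
proof -
  define m where "m = (\<Sum>a\<in>A. p a * f a)"
  have "0 \<le> (\<Sum>a\<in>A. p a * (f a - m)^2)" by (intro sum_nonneg) (simp add: p)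
  also have "\<dots> = (\<Sum>a\<in>A. p a * (f a)^2) - 2 * m * (\<Sum>a\<in>A. p a * f a) + m^2 * (\<Sum>a\<in>A. p a)"
    by (simp add: power2_eq_square algebra_simps sum.distrib sum_subtractf sum_distrib_left)
  also have "\<dots> = (\<Sum>a\<in>A. p a * (f a)^2) - m^2" using s unfolding m_def by (simp add: power2_eq_square)
  finally show ?thesis unfolding m_def by simp
qed

lemma cs_sum:
  fixes a :: "nat \<Rightarrow> real"
  shows "(\<Sum>k<n. a k)^2 \<le> real n * (\<Sum>k<n. (a k)^2)"
proof (cases "n = 0")
  case True then show ?thesis by simp
next
  case False
  then have n: "real n > 0" by simp
  have "(\<Sum>k<n. (1 / real n) * a k)^2 \<le> (\<Sum>k<n. (1 / real n) * (a k)^2)"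
    by (rule jensen_sq) (use n in auto)
  moreover have e1: "(\<Sum>k<n. (1 / real n) * a k) = (1 / real n) * (\<Sum>k<n. a k)"
    by (rule sum_distrib_left[symmetric])
  moreover have e2: "(\<Sum>k<n. (1 / real n) * (a k)^2) = (1 / real n) * (\<Sum>k<n. (a k)^2)"
    by (rule sum_distrib_left[symmetric])
  ultimately have "((1 / real n) * (\<Sum>k<n. a k))^2 \<le> (1 / real n) * (\<Sum>k<n. (a k)^2)"
    by simp
  then have "(1 / real n)^2 * (\<Sum>k<n. a k)^2 \<le> (1 / real n) * (\<Sum>k<n. (a k)^2)"
    by (simp only: power_mult_distrib)
  then have "(real n)^2 * ((1 / real n)^2 * (\<Sum>k<n. a k)^2) \<le> (real n)^2 * ((1 / real n) * (\<Sum>k<n. (a k)^2))"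
    by (rule mult_left_mono) simp
  then show ?thesis using n by (simp add: power2_eq_square field_simps)
qed

context wormctx begin

abbreviation WW where "WW \<equiv> worm_space V E"
abbreviation C0 where "C0 \<equiv> Ck V E 0"
definition lam0 where "lam0 = wtS w M (Ck V E 0)"
definition lam2 where "lam2 = wtS w M (Ck V E 2)"
definition lam4 where "lam4 = wtS w M (Ck V E 4)"
definition KK where "KK = 2 * DD / (w * lam0) * (real (card V) * (lam0 + lam2) + 2 * lam4)"

lemma empty_C0: "{} \<in> C0" unfolding Ck_def by simp

lemma lam0_pos: "lam0 > 0"
proof -
  have "wt w M {} \<le> lam0" unfolding lam0_def wtS_def
    by (rule member_le_sum) (use empty_C0 finCk wt_pos less_imp_le in auto)
  then show ?thesis using wt_pos[of "{}"] by linarith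
qed

lemma lam_nonneg: "lam2 \<ge> 0" "lam4 \<ge> 0"
  unfolding lam2_def lam4_def wtS_def by (auto intro!: sum_nonneg less_imp_le[OF wt_pos])

lemma KK_nonneg: "KK \<ge> 0"
  unfolding KK_def using lam0_pos lam_nonneg w0 DD1 by (auto intro!: mult_nonneg_nonneg add_nonneg_nonneg)

lemma pis_pos: "pis A > 0" unfolding pis_def Psi_def using wt_pos cardV2 by auto

lemma P_nonneg_all: "A \<in> WW \<Longrightarrow> worm_P V E w M A C \<ge> 0"
  using P_nonneg P_lazy by (cases "A = C") (auto intro: order_trans[of 0 "1/2"])

definition TT where "TT = (SIGMA I:WW. SIGMA J:C0. {..<lenp I J})"
definition st where "st t = (Zp (fst t) (fst (snd t)) (snd (snd t)), Zp (fst t) (fst (snd t)) (Suc (snd (snd t))))"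
definition etaf where "etaf t = eta (fst t) (fst (snd t)) (snd (snd t))"

lemma finTT: "finite TT" unfolding TT_def using finW finCk by (auto intro!: finite_SigmaI)

lemma TT_mem: "t \<in> TT \<longleftrightarrow> fst t \<in> WW \<and> fst (snd t) \<in> C0 \<and> snd (snd t) < lenp (fst t) (fst (snd t))"
  unfolding TT_def by (cases t) auto

lemma st_W: "t \<in> TT \<Longrightarrow> st t \<in> WW \<times> WW"
  unfolding TT_mem st_def using Zp_W by (auto simp: Suc_le_eq less_imp_le)

lemma phi_sum: "(\<Sum>x\<in>Ck V E 0 \<union> Ck V E 2 \<union> Ck V E 4. phi x * wt w M x) = real (card V) * (lam0 + lam2) + 2 * lam4"
proof -
  have d1: "Ck V E 0 \<inter> Ck V E 2 = {}" "(Ck V E 0 \<union> Ck V E 2) \<inter> Ck V E 4 = {}" unfolding Ck_def by auto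
  have "(\<Sum>x\<in>Ck V E 0 \<union> Ck V E 2 \<union> Ck V E 4. phi x * wt w M x)
      = (\<Sum>x\<in>Ck V E 0. phi x * wt w M x) + (\<Sum>x\<in>Ck V E 2. phi x * wt w M x) + (\<Sum>x\<in>Ck V E 4. phi x * wt w M x)"
    using d1 finCk by (simp add: sum.union_disjoint)
  also have "(\<Sum>x\<in>Ck V E 0. phi x * wt w M x) = real (card V) * lam0"
    unfolding lam0_def wtS_def sum_distrib_left by (intro sum.cong) (auto simp: phi_def Ck_def)
  also have "(\<Sum>x\<in>Ck V E 2. phi x * wt w M x) = real (card V) * lam2"
    unfolding lam2_def wtS_def sum_distrib_left by (intro sum.cong) (auto simp: phi_def Ck_def)
  also have "(\<Sum>x\<in>Ck V E 4. phi x * wt w M x) = 2 * lam4"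
    unfolding lam4_def wtS_def sum_distrib_left by (intro sum.cong) (auto simp: phi_def Ck_def)
  finally show ?thesis by (simp add: algebra_simps)
qed

lemma fiber_bound:
  assumes Z: "Z \<in> WW" and Z': "Z' \<in> WW"
  shows "(\<Sum>t\<in>{t \<in> TT. st t = (Z, Z')}. pis (fst t) * (wt w M (fst (snd t)) / lam0))
          \<le> KK * (pis Z * worm_P V E w M Z Z')"
proof (cases "{t \<in> TT. st t = (Z, Z')} = {}")
  case True
  have "(\<Sum>t\<in>{t \<in> TT. st t = (Z, Z')}. pis (fst t) * (wt w M (fst (snd t)) / lam0)) = 0"
    by (simp only: True sum.empty)
  moreover have "KK * (pis Z * worm_P V E w M Z Z') \<ge> 0"
    using KK_nonneg pis_pos[of Z] P_nonneg_all[OF Z, of Z'] by simp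
  ultimately show ?thesis by simp
next
  case False
  define Fib where "Fib = {t \<in> TT. st t = (Z, Z')}"
  obtain t0 where t0: "t0 \<in> Fib" using False unfolding Fib_def by blast
  obtain I0 J0 k0 where t0e: "t0 = (I0, J0, k0)" by (cases t0) auto
  have I0: "I0 \<in> WW" and J0: "J0 \<in> C0" and k0: "k0 < lenp I0 J0" using t0 t0e unfolding Fib_def TT_mem by auto
  have ZZ: "Z = Zp I0 J0 k0" "Z' = Zp I0 J0 (Suc k0)" using t0 t0e unfolding Fib_def st_def by auto
  define e where "e = ordD (symdiff I0 J0) ! k0"
  have e: "e \<in> E" unfolding e_def by (rule step_edge[OF I0 J0 k0])
  have Zf: "Z' = flip Z e" unfolding ZZ e_def by (rule Zp_Suc[OF I0 J0 k0])
  have ZneZ': "Z \<noteq> Z'" unfolding Zf flip_def symdiff_def by blast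
  have Pl: "pis Z * worm_P V E w M Z Z' \<ge> w * wt w M Z / (2 * DD)"
    using off_low[OF Z _ e] Z' Zf ZneZ' unfolding worm_P_def by simp
  have termb: "pis (fst t) * (wt w M (fst (snd t)) / lam0) \<le> wt w M Z / lam0 * (phi (etaf t) * wt w M (etaf t))"
    if t: "t \<in> Fib" for t
  proof -
    obtain I J k where te: "t = (I, J, k)" by (cases t) auto
    have I: "I \<in> WW" and J: "J \<in> C0" and k: "k < lenp I J" using t te unfolding Fib_def TT_mem by auto
    have Zt: "Z = Zp I J k" using t te unfolding Fib_def st_def by auto
    have lp: "wt w M I * wt w M J = wt w M Z * wt w M (eta I J k)" unfolding Zt by (rule lam_path[OF I J])
    have ps: "Psi I \<le> phi (eta I J k)" using eta_props(2)[OF I J] k by simp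
    have "pis I * (wt w M J / lam0) = Psi I * (wt w M Z * wt w M (eta I J k)) / lam0"
      unfolding pis_def using lp by (simp add: mult_ac)
    also have "\<dots> \<le> phi (eta I J k) * (wt w M Z * wt w M (eta I J k)) / lam0"
      by (intro divide_right_mono mult_right_mono ps) (use lam0_pos wt_pos in \<open>auto intro: less_imp_le\<close>)
    finally show ?thesis unfolding te etaf_def by (simp add: mult_ac)
  qed
  have inj: "inj_on etaf Fib"
  proof (rule inj_onI)
    fix t t' assume t: "t \<in> Fib" and t': "t' \<in> Fib" and et: "etaf t = etaf t'"
    obtain I J k where te: "t = (I, J, k)" by (cases t) auto
    obtain I' J' k' where te': "t' = (I', J', k')" by (cases t') auto
    have I: "I \<in> WW" and J: "J \<in> C0" and k: "k < lenp I J" using t te unfolding Fib_def TT_mem by auto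
    have I': "I' \<in> WW" and J': "J' \<in> C0" and k': "k' < lenp I' J'" using t' te' unfolding Fib_def TT_mem by auto
    have s1: "Zp I J k = Zp I' J' k'" "Zp I J (Suc k) = Zp I' J' (Suc k')"
      using t t' te te' unfolding Fib_def st_def by auto
    have "eta I J k = eta I' J' k'" using et te te' unfolding etaf_def by simp
    then have "I = I' \<and> J = J' \<and> k = k'" using eta_inj[OF I J k I' J' k' s1] by blast
    then show "t = t'" using te te' by simp
  qed
  have img: "etaf ` Fib \<subseteq> Ck V E 0 \<union> Ck V E 2 \<union> Ck V E 4"
  proof
    fix x assume "x \<in> etaf ` Fib"
    then obtain t where t: "t \<in> Fib" "x = etaf t" by blast
    obtain I J k where te: "t = (I, J, k)" by (cases t) auto
    have I: "I \<in> WW" and J: "J \<in> C0" and k: "k < lenp I J" using t te unfolding Fib_def TT_mem by auto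
    show "x \<in> Ck V E 0 \<union> Ck V E 2 \<union> Ck V E 4" using eta_props(1)[OF I J] k t te unfolding etaf_def by simp
  qed
  have phinn: "phi x * wt w M x \<ge> 0" for x
    unfolding phi_def using wt_pos[of x] by (auto intro!: mult_nonneg_nonneg less_imp_le)
  have finFib: "finite Fib" unfolding Fib_def using finTT by simp
  have "(\<Sum>t\<in>Fib. pis (fst t) * (wt w M (fst (snd t)) / lam0)) \<le> (\<Sum>t\<in>Fib. wt w M Z / lam0 * (phi (etaf t) * wt w M (etaf t)))"
    by (rule sum_mono) (rule termb)
  also have "\<dots> = wt w M Z / lam0 * (\<Sum>t\<in>Fib. phi (etaf t) * wt w M (etaf t))" by (simp add: sum_distrib_left)
  finally have A0: "(\<Sum>t\<in>Fib. pis (fst t) * (wt w M (fst (snd t)) / lam0)) \<le> wt w M Z / lam0 * (\<Sum>t\<in>Fib. phi (etaf t) * wt w M (etaf t))" .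
  have "(\<Sum>t\<in>Fib. phi (etaf t) * wt w M (etaf t)) = (\<Sum>x\<in>etaf ` Fib. phi x * wt w M x)"
    using sum.reindex[OF inj, of "\<lambda>x. phi x * wt w M x"] by simp
  also have "\<dots> \<le> (\<Sum>x\<in>Ck V E 0 \<union> Ck V E 2 \<union> Ck V E 4. phi x * wt w M x)"
    by (rule sum_mono2) (use img finCk phinn in auto)
  also have "\<dots> = real (card V) * (lam0 + lam2) + 2 * lam4" by (rule phi_sum)
  finally have S: "(\<Sum>t\<in>Fib. phi (etaf t) * wt w M (etaf t)) \<le> real (card V) * (lam0 + lam2) + 2 * lam4" .
  have "wt w M Z / lam0 * (\<Sum>t\<in>Fib. phi (etaf t) * wt w M (etaf t)) \<le> wt w M Z / lam0 * (real (card V) * (lam0 + lam2) + 2 * lam4)"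
    by (rule mult_left_mono[OF S]) (use lam0_pos wt_pos[of Z] in simp)
  then have A1: "(\<Sum>t\<in>Fib. pis (fst t) * (wt w M (fst (snd t)) / lam0)) \<le> wt w M Z / lam0 * (real (card V) * (lam0 + lam2) + 2 * lam4)"
    using A0 by linarith
  have "KK * (w * wt w M Z / (2 * DD)) = wt w M Z / lam0 * (real (card V) * (lam0 + lam2) + 2 * lam4)"
    unfolding KK_def using w0 lam0_pos DD1 by (simp add: field_simps)
  moreover have "KK * (w * wt w M Z / (2 * DD)) \<le> KK * (pis Z * worm_P V E w M Z Z')"
    by (rule mult_left_mono[OF Pl KK_nonneg])
  ultimately show ?thesis using A1 unfolding Fib_def by linarith
qed

end


context wormctx begin

lemma poinc:
  fixes g :: "'a set set \<Rightarrow> real"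
  assumes orth: "(\<Sum>x\<in>WW. pis x * g x) = 0"
  shows "(\<Sum>x\<in>WW. pis x * (g x)^2)
     \<le> (2 * real (card E) * KK) * ((1/2) * (\<Sum>x\<in>WW. \<Sum>y\<in>WW. pis x * worm_P V E w M x y * (g x - g y)^2))"
proof -
  define p0 where "p0 J = wt w M J / lam0" for J
  have p0nn: "p0 J \<ge> 0" for J unfolding p0_def using wt_pos[of J] lam0_pos by simp
  have p0s: "(\<Sum>J\<in>C0. p0 J) = 1" unfolding p0_def using lam0_pos
    by (simp add: sum_divide_distrib[symmetric] lam0_def wtS_def)
  define m where "m = (\<Sum>J\<in>C0. p0 J * g J)"
  define d where "d I J k = g (Zp I J (Suc k)) - g (Zp I J k)" for I J k
  have pisnn: "pis x \<ge> 0" for x using pis_pos[of x] by simp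
  have S1: "(\<Sum>x\<in>WW. pis x * (g x)^2) \<le> (\<Sum>I\<in>WW. pis I * (g I - m)^2)"
  proof -
    have "(\<Sum>I\<in>WW. pis I * (g I - m)^2) = (\<Sum>x\<in>WW. pis x * (g x)^2) - 2 * m * (\<Sum>x\<in>WW. pis x * g x) + m^2 * (\<Sum>x\<in>WW. pis x)"
      by (simp add: power2_eq_square algebra_simps sum.distrib sum_subtractf sum_distrib_left)
    also have "\<dots> = (\<Sum>x\<in>WW. pis x * (g x)^2) + m^2 * (\<Sum>x\<in>WW. pis x)" using orth by simp
    finally show ?thesis using sum_nonneg[of WW pis] pisnn by (simp add: mult_nonneg_nonneg)
  qed
  have S2: "(g I - m)^2 \<le> (\<Sum>J\<in>C0. p0 J * (g I - g J)^2)" for I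
  proof -
    have a: "(\<Sum>J\<in>C0. p0 J * (g I - g J)) = g I * (\<Sum>J\<in>C0. p0 J) - (\<Sum>J\<in>C0. p0 J * g J)"
      by (simp add: algebra_simps sum_subtractf sum_distrib_left)
    have "g I - m = (\<Sum>J\<in>C0. p0 J * (g I - g J))"
      unfolding a m_def p0s by simp
    then show ?thesis using jensen_sq[OF finCk p0nn p0s, of "\<lambda>J. g I - g J"] by simp
  qed
  have S3: "(g I - g J)^2 \<le> real (card E) * (\<Sum>k<lenp I J. (d I J k)^2)" if I: "I \<in> WW" and J: "J \<in> C0" for I J
  proof -
    have "(\<Sum>k<lenp I J. d I J k) = g (Zp I J (lenp I J)) - g (Zp I J 0)"
      unfolding d_def by (rule sum_lessThan_telescope)
    then have t: "(\<Sum>k<lenp I J. d I J k) = g I - g J" using Zp_end[OF I J] Zp_0 by simp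
    have "(g I - g J)^2 \<le> real (lenp I J) * (\<Sum>k<lenp I J. (d I J k)^2)" unfolding t[symmetric] by (rule cs_sum)
    also have "\<dots> \<le> real (card E) * (\<Sum>k<lenp I J. (d I J k)^2)"
      by (rule mult_right_mono) (use lenp_le[OF I J] in \<open>auto intro: sum_nonneg\<close>)
    finally show ?thesis .
  qed
  have S4: "(\<Sum>I\<in>WW. pis I * (g I - m)^2) \<le> (\<Sum>I\<in>WW. pis I * (\<Sum>J\<in>C0. p0 J * (real (card E) * (\<Sum>k<lenp I J. (d I J k)^2))))"
  proof (rule sum_mono)
    fix I assume I: "I \<in> WW"
    have "(g I - m)^2 \<le> (\<Sum>J\<in>C0. p0 J * (real (card E) * (\<Sum>k<lenp I J. (d I J k)^2)))"
      using S2[of I] by (rule order_trans) (intro sum_mono mult_left_mono S3[OF I] p0nn; simp)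
    then show "pis I * (g I - m)^2 \<le> pis I * (\<Sum>J\<in>C0. p0 J * (real (card E) * (\<Sum>k<lenp I J. (d I J k)^2)))"
      by (rule mult_left_mono) (rule pisnn)
  qed
  define G where "G t = pis (fst t) * p0 (fst (snd t)) * (d (fst t) (fst (snd t)) (snd (snd t)))^2" for t
  have S5: "(\<Sum>I\<in>WW. pis I * (\<Sum>J\<in>C0. p0 J * (real (card E) * (\<Sum>k<lenp I J. (d I J k)^2))))
       = real (card E) * (\<Sum>I\<in>WW. \<Sum>J\<in>C0. \<Sum>k<lenp I J. pis I * p0 J * (d I J k)^2)"
    by (simp add: sum_distrib_left mult_ac)
  have S6: "(\<Sum>I\<in>WW. \<Sum>J\<in>C0. \<Sum>k<lenp I J. pis I * p0 J * (d I J k)^2) = (\<Sum>t\<in>TT. G t)"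
  proof -
    have inner: "(\<Sum>J\<in>C0. \<Sum>k<lenp I J. pis I * p0 J * (d I J k)^2)
        = (\<Sum>(J,k)\<in>(SIGMA J:C0. {..<lenp I J}). pis I * p0 J * (d I J k)^2)" for I
      by (rule sum.Sigma) (use finCk in auto)
    have "(\<Sum>I\<in>WW. \<Sum>J\<in>C0. \<Sum>k<lenp I J. pis I * p0 J * (d I J k)^2)
        = (\<Sum>I\<in>WW. \<Sum>(J,k)\<in>(SIGMA J:C0. {..<lenp I J}). pis I * p0 J * (d I J k)^2)"
      by (simp only: inner)
    also have "\<dots> = (\<Sum>(I,p)\<in>TT. (case p of (J,k) \<Rightarrow> pis I * p0 J * (d I J k)^2))"
      unfolding TT_def by (rule sum.Sigma) (use finW finCk in \<open>auto intro!: finite_SigmaI\<close>)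
    also have "\<dots> = (\<Sum>t\<in>TT. G t)" unfolding G_def by (intro sum.cong) (auto simp: split_def)
    finally show ?thesis .
  qed
  have S7: "(\<Sum>t\<in>TT. G t) = (\<Sum>q\<in>WW \<times> WW. \<Sum>t\<in>{t \<in> TT. st t = q}. G t)"
  proof -
    have im: "st ` TT \<subseteq> WW \<times> WW" using st_W by blast
    have fp: "finite (WW \<times> WW)" using finW by simp
    show ?thesis by (rule sum.group[OF finTT fp im, symmetric])
  qed
  have S8: "(\<Sum>t\<in>{t \<in> TT. st t = q}. G t) \<le> (g (snd q) - g (fst q))^2 * (KK * (pis (fst q) * worm_P V E w M (fst q) (snd q)))"
    if q: "q \<in> WW \<times> WW" for q
  proof -
    obtain Z Z' where qe: "q = (Z, Z')" by (cases q) auto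
    have Z: "Z \<in> WW" "Z' \<in> WW" using q qe by auto
    have "(\<Sum>t\<in>{t \<in> TT. st t = q}. G t) = (\<Sum>t\<in>{t \<in> TT. st t = q}. (g Z' - g Z)^2 * (pis (fst t) * (wt w M (fst (snd t)) / lam0)))"
    proof (intro sum.cong refl)
      fix t assume "t \<in> {t \<in> TT. st t = q}"
      then have "st t = (Z, Z')" using qe by simp
      then have "d (fst t) (fst (snd t)) (snd (snd t)) = g Z' - g Z" unfolding d_def st_def by auto
      then show "G t = (g Z' - g Z)^2 * (pis (fst t) * (wt w M (fst (snd t)) / lam0))"
        unfolding G_def p0_def by (simp add: mult_ac)
    qed
    also have "\<dots> = (g Z' - g Z)^2 * (\<Sum>t\<in>{t \<in> TT. st t = (Z, Z')}. pis (fst t) * (wt w M (fst (snd t)) / lam0))"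
      using qe by (simp add: sum_distrib_left)
    also have "\<dots> \<le> (g Z' - g Z)^2 * (KK * (pis Z * worm_P V E w M Z Z'))"
      by (rule mult_left_mono[OF fiber_bound[OF Z]]) simp
    finally show ?thesis using qe by simp
  qed
  have S9: "(\<Sum>q\<in>WW \<times> WW. (g (snd q) - g (fst q))^2 * (KK * (pis (fst q) * worm_P V E w M (fst q) (snd q))))
      = KK * (\<Sum>x\<in>WW. \<Sum>y\<in>WW. pis x * worm_P V E w M x y * (g x - g y)^2)"
  proof -
    have "(\<Sum>x\<in>WW. \<Sum>y\<in>WW. pis x * worm_P V E w M x y * (g x - g y)^2)
        = (\<Sum>(x,y)\<in>WW \<times> WW. pis x * worm_P V E w M x y * (g x - g y)^2)"
      by (rule sum.cartesian_product)
    also have "\<dots> = (\<Sum>q\<in>WW \<times> WW. pis (fst q) * worm_P V E w M (fst q) (snd q) * (g (snd q) - g (fst q))^2)"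
      by (intro sum.cong) (auto simp: split_def power2_commute)
    finally show ?thesis by (simp add: sum_distrib_left mult_ac)
  qed
  have "(\<Sum>x\<in>WW. pis x * (g x)^2) \<le> real (card E) * (\<Sum>t\<in>TT. G t)"
    using order_trans[OF S1 S4] unfolding S5 S6 .
  also have "(\<Sum>t\<in>TT. G t) \<le> KK * (\<Sum>x\<in>WW. \<Sum>y\<in>WW. pis x * worm_P V E w M x y * (g x - g y)^2)"
    unfolding S7 S9[symmetric] by (rule sum_mono) (rule S8)
  then have "real (card E) * (\<Sum>t\<in>TT. G t) \<le> real (card E) * (KK * (\<Sum>x\<in>WW. \<Sum>y\<in>WW. pis x * worm_P V E w M x y * (g x - g y)^2))"
    by (rule mult_left_mono) simp
  finally show ?thesis by (simp add: mult_ac)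
qed

end


context wormctx begin

lemma cardW2: "card WW \<ge> 2"
proof -
  obtain e where e: "e \<in> E" using Ene by blast
  have "{} \<in> WW" using W_iff by simp
  moreover have "{e} \<in> WW" using W_iff e bdry_single[OF e] card_edge[OF e] by simp
  moreover have "{} \<noteq> {e}" by simp
  ultimately have "{{}, {e}} \<subseteq> WW" by simp
  then have "card {{}, {e}} \<le> card WW" by (rule card_mono[OF finW])
  then show ?thesis by simp
qed

lemma KK_pos: "KK > 0"
proof -
  have "real (card V) * (lam0 + lam2) + 2 * lam4 > 0"
    using cardV2 lam0_pos lam_nonneg by (simp add: add_pos_nonneg)
  moreover have "2 * DD / (w * lam0) > 0" using DD1 w0 lam0_pos by simp
  ultimately show ?thesis unfolding KK_def by (rule mult_pos_pos[rotated])
qed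

lemma cardE_pos: "card E > 0" using Ene finE by (simp add: card_gt_0_iff)

theorem worm_relax:
  "abs_spectral_gap WW (worm_P V E w M) > 0 \<and> relaxation_time WW (worm_P V E w M) \<le> 2 * real (card E) * KK"
proof -
  interpret rc: revchain WW "worm_P V E w M" pis "2 * real (card E) * KK"
  proof
    show "finite WW" by (rule finW)
    show "\<And>x. x \<in> WW \<Longrightarrow> pis x > 0" using pis_pos by blast
    show "\<And>x. x \<in> WW \<Longrightarrow> (\<Sum>y\<in>WW. worm_P V E w M x y) = 1" by (rule P_rowsum)
    show "\<And>x y. x \<in> WW \<Longrightarrow> y \<in> WW \<Longrightarrow> x \<noteq> y \<Longrightarrow> worm_P V E w M x y \<ge> 0" using P_nonneg by blast
    show "\<And>x. x \<in> WW \<Longrightarrow> worm_P V E w M x x \<ge> 1/2" by (rule P_lazy)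
    show "\<And>x y. x \<in> WW \<Longrightarrow> y \<in> WW \<Longrightarrow> pis x * worm_P V E w M x y = pis y * worm_P V E w M y x" by (rule P_rev)
    show "2 * real (card E) * KK > 0" using KK_pos cardE_pos by simp
    show "\<And>g. (\<Sum>x\<in>WW. pis x * g x) = 0 \<Longrightarrow>
        (\<Sum>x\<in>WW. pis x * (g x)^2) \<le> 2 * real (card E) * KK * ((1/2) * (\<Sum>x\<in>WW. \<Sum>y\<in>WW. pis x * worm_P V E w M x y * (g x - g y)^2))"
      by (rule poinc)
    show "card WW \<ge> 2" by (rule cardW2)
  qed
  show ?thesis by (rule rc.relax_bound)
qed

lemma B_le:
  assumes c2: "wtS w M (Ck V E 2) / wtS w M (Ck V E 0) \<le> \<chi>2"
    and c4: "wtS w M (Ck V E 4) / wtS w M (Ck V E 0) \<le> \<chi>4"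
  shows "2 * real (card E) * KK \<le> 8 * real (max_degree V E) * inverse w * real (card E)
              * ((1 + \<chi>2) * (2 + real (card V)) + 2 * \<chi>4)"
proof -
  define r2 where "r2 = lam2 / lam0"
  define r4 where "r4 = lam4 / lam0"
  have r2c: "r2 \<le> \<chi>2" and r4c: "r4 \<le> \<chi>4" using c2 c4 unfolding r2_def r4_def lam0_def lam2_def lam4_def .
  have r0: "r2 \<ge> 0" "r4 \<ge> 0" unfolding r2_def r4_def using lam0_pos lam_nonneg by auto
  have KKe: "2 * real (card E) * KK = (4 * DD * real (card E) / w) * (real (card V) * (1 + r2) + 2 * r4)"
    unfolding KK_def r2_def r4_def using lam0_pos w0 by (simp add: field_simps)
  have X: "real (card V) * (1 + r2) + 2 * r4 \<le> 2 * ((1 + \<chi>2) * (2 + real (card V)) + 2 * \<chi>4)"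
  proof -
    have "real (card V) * (1 + r2) \<le> (2 + real (card V)) * (1 + \<chi>2)"
      by (rule mult_mono) (use r2c r0 in auto)
    moreover have "(2 + real (card V)) * (1 + \<chi>2) \<ge> 0" using r2c r0 by simp
    ultimately show ?thesis using r4c r0 by (simp add: algebra_simps)
  qed
  have pos: "4 * DD * real (card E) / w \<ge> 0" using w0 by simp
  have "2 * real (card E) * KK \<le> (4 * DD * real (card E) / w) * (2 * ((1 + \<chi>2) * (2 + real (card V)) + 2 * \<chi>4))"
    unfolding KKe by (rule mult_left_mono[OF X pos])
  also have "\<dots> = 8 * real (max_degree V E) * inverse w * real (card E) * ((1 + \<chi>2) * (2 + real (card V)) + 2 * \<chi>4)"
    by (simp add: field_simps)
  finally show ?thesis .
qed

end

theorem theorem1: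
  fixes V :: "'a set" and E M :: "'a set set" and w \<chi>2 \<chi>4 :: real
  assumes "simple_graph V E"
    and "E \<noteq> {}"
    and "0 < w" and "w < 1"
    and "M \<subseteq> E"
    and "wtS w M (Ck V E 2) / wtS w M (Ck V E 0) \<le> \<chi>2"
    and "wtS w M (Ck V E 4) / wtS w M (Ck V E 0) \<le> \<chi>4"
  shows "abs_spectral_gap (worm_space V E) (worm_P V E w M) > 0 \<and>
         relaxation_time (worm_space V E) (worm_P V E w M)
           \<le> 8 * real (max_degree V E) * inverse w * real (card E)
              * ((1 + \<chi>2) * (2 + real (card V)) + 2 * \<chi>4)"
proof -
  interpret wormctx V E M w using assms(1-5) by unfold_locales
  show ?thesis using worm_relax B_le[OF assms(6,7)] by linarith
qed



end
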